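(* The following hold as $n\to\infty$: (i) $C_3(n,\mathrm{SP}_3)=\Omega\!\left(\left(\frac{\log n}{\log\log n}\right)^{1/8}\right)$; (ii) $C_3(n,\mathrm{SP}^1_4)=\Omega(n^{1/8})$ and $C_3(n,\mathrm{SP}^2_4)=\Omega(n^{1/7})$; (iii) for every $t\ge 5$, $C_3(n,\mathrm{SP}^1_t)=\Omega(n^{1/3})$ and $C_3(n,\mathrm{SP}^2_t)=\Omega(n^{1/3})$.
   Context: An $r$-graph is an $r$-uniform hypergraph; $K_n^{(r)}$ is the complete $r$-graph on $n$ vertices. A copy of an $r$-graph $H$ in $K_n^{(r)}$ is a subhypergraph isomorphic to $H$. An $(n,r,H)$-local coloring with $k$ colors is a family of edge-colorings $f_v:E(K_n^{(r)})\to[k]$, one per vertex $v$, such that for every copy $T$ of $H$ there is $u\in V(T)$ with $f_u$ injective on $E(T)$. $C_r(n,H)$ is the minimum such $k$. $\mathrm{SP}_3$: vertex set $\{a,b,c,d,e,f\}$, edges $\{a,b,c\},\{b,c,d\},\{d,e,f\}$. For $t\ge 1$, $\mathrm{SP}^1_t$ is the $3$-graph with edges $e_j=\{v_{s_j},v_{s_j+1},v_{s_j+2}\}$, $j=1,\dots,t$, where $s_1=1$, $s_{j+1}=s_j+2$ for odd $j$ and $s_{j+1}=s_j+1$ for even $j$ (so its edges are $\{v_1,v_2,v_3\},\{v_3,v_4,v_5\},\{v_4,v_5,v_6\},\{v_6,v_7,v_8\},\dots$ and it has $\lceil (3t+3)/2\rceil$ vertices). $\mathrm{SP}^2_t$ is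 defined the same way but with $s_{j+1}=s_j+1$ for odd $j$ and $s_{j+1}=s_j+2$ for even $j$ (edges $\{v_1,v_2,v_3\},\{v_2,v_3,v_4\},\{v_4,v_5,v_6\},\{v_5,v_6,v_7\},\dots$; it has $\lceil (3t+2)/2\rceil$ vertices). Thus consecutive edges alternately share one and two vertices. *)

theory Defs
  imports Main "HOL-Library.Landau_Symbols"
begin

(* An r-graph is represented by its edge set (a set of vertex sets); its vertex
   set is the union of its edges (all graphs considered have no isolated vertices). *)

definition is_copy :: "nat \<Rightarrow> nat set set \<Rightarrow> nat set set \<Rightarrow> bool" where
  "is_copy n H T \<longleftrightarrow>
     (\<exists>\<phi>::nat \<Rightarrow> nat. inj_on \<phi> (\<Union>H) \<and> \<phi> ` (\<Union>H) \<subseteq> {..<n} \<and> T = (\<lambda>e. \<phi> ` e) ` H)"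

definition local_coloring ::
  "nat \<Rightarrow> nat \<Rightarrow> nat set set \<Rightarrow> nat \<Rightarrow> (nat \<Rightarrow> nat set \<Rightarrow> nat) \<Rightarrow> bool" where
  "local_coloring n r H k f \<longleftrightarrow>
     (\<forall>v<n. \<forall>e. e \<subseteq> {..<n} \<and> card e = r \<longrightarrow> f v e < k) \<and>
     (\<forall>T. is_copy n H T \<longrightarrow> (\<exists>u\<in>\<Union>T. inj_on (f u) T))"

definition C :: "nat \<Rightarrow> nat \<Rightarrow> nat set set \<Rightarrow> nat" where
  "C r n H = (LEAST k. \<exists>f. local_coloring n r H k f)"

definition SP3 :: "nat set set" where
  "SP3 = {{0,1,2},{1,2,3},{3,4,5}}"

(* start index s_{i+1} of edge number i+1 *)
primrec s1 :: "nat \<Rightarrow> nat" where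
  "s1 0 = 1"
| "s1 (Suc i) = s1 i + (if even i then 2 else 1)"

primrec s2 :: "nat \<Rightarrow> nat" where
  "s2 0 = 1"
| "s2 (Suc i) = s2 i + (if even i then 1 else 2)"

definition SP1 :: "nat \<Rightarrow> nat set set" where
  "SP1 t = (\<lambda>i. {s1 i, s1 i + 1, s1 i + 2}) ` {..<t}"

definition SP2 :: "nat \<Rightarrow> nat set set" where
  "SP2 t = (\<lambda>i. {s2 i, s2 i + 1, s2 i + 2}) ` {..<t}"

end

theory Submission
  imports Defs "HOL-Analysis.Convex" "HOL-Library.FuncSet"
begin

lemma no_bad_copy:
  assumes lc: "local_coloring n 3 H k f"
    and inj: "inj_on \<phi> (\<Union>H)" and rng: "\<phi> ` \<Union>H \<subseteq> {..<n}"
    and bad: "\<And>v. v \<in> \<Union>H \<Longrightarrow> \<exists>e1\<in>H. \<exists>e2\<in>H. e1 \<noteq> e2 \<and> f (\<phi> v) (\<phi> ` e1) = f (\<phi> v) (\<phi> ` e2)"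
  shows False
proof -
  let ?T = "(\<lambda>e. \<phi> ` e) ` H"
  have "is_copy n H ?T" unfolding is_copy_def using inj rng by blast
  with lc obtain u where u: "u \<in> \<Union>?T" and ij: "inj_on (f u) ?T"
    unfolding local_coloring_def by blast
  from u obtain v where v: "v \<in> \<Union>H" and uv: "u = \<phi> v" by auto
  from bad[OF v] obtain e1 e2 where e: "e1 \<in> H" "e2 \<in> H" "e1 \<noteq> e2"
      "f (\<phi> v) (\<phi> ` e1) = f (\<phi> v) (\<phi> ` e2)" by blast
  have "\<phi> ` e1 \<noteq> \<phi> ` e2"
  proof
    assume "\<phi> ` e1 = \<phi> ` e2"
    moreover have "e1 \<subseteq> \<Union>H" "e2 \<subseteq> \<Union>H" using e by auto
    ultimately have "e1 = e2" using inj by (simp add: inj_on_image_eq_iff)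
    with e show False by simp
  qed
  moreover have "\<phi> ` e1 \<in> ?T" "\<phi> ` e2 \<in> ?T" using e by auto
  ultimately show False using ij e(4) uv unfolding inj_on_def by blast
qed

lemma exists_lc:
  assumes "\<Union>H \<noteq> {}"
  shows "\<exists>k f. local_coloring n 3 H k f"
proof -
  have fin: "finite (Pow {..<n})" by simp
  obtain h where h: "bij_betw h (Pow {..<n}) {0..<card (Pow {..<n})}"
    using ex_bij_betw_finite_nat[OF fin] by blast
  define f where "f = (\<lambda>(v::nat) e. h e)"
  have col: "\<forall>v<n. \<forall>e. e \<subseteq> {..<n} \<and> card e = 3 \<longrightarrow> f v e < card (Pow {..<n})"
    using h unfolding f_def bij_betw_def by auto
  have "\<forall>T. is_copy n H T \<longrightarrow> (\<exists>u\<in>\<Union>T. inj_on (f u) T)"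
  proof (intro allI impI)
    fix T assume "is_copy n H T"
    then obtain \<phi> where \<phi>: "inj_on \<phi> (\<Union>H)" "\<phi> ` (\<Union>H) \<subseteq> {..<n}" "T = (\<lambda>e. \<phi> ` e) ` H"
      unfolding is_copy_def by blast
    from assms obtain v where v: "v \<in> \<Union>H" by blast
    have "\<phi> v \<in> \<Union>T" using v \<phi>(3) by auto
    moreover have "T \<subseteq> Pow {..<n}" using \<phi> by auto
    hence "inj_on (f (\<phi> v)) T" using h unfolding f_def bij_betw_def
      by (auto intro: inj_on_subset)
    ultimately show "\<exists>u\<in>\<Union>T. inj_on (f u) T" by blast
  qed
  with col show ?thesis unfolding local_coloring_def by blast
qed

lemma C_lc:
  assumes "\<Union>H \<noteq> {}"
  shows "\<exists>f. local_coloring n 3 H (C 3 n H) f"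
  unfolding C_def by (rule LeastI_ex) (use exists_lc[OF assms] in blast)

lemma colors_pos:
  assumes lc: "local_coloring n 3 H k f" and n: "n \<ge> 3"
  shows "k \<ge> 1"
proof -
  have "{0,1,2} \<subseteq> {..<n}" using n by auto
  moreover have "card {0::nat,1,2} = 3" by simp
  ultimately have "f 0 {0,1,2} < k" using lc n unfolding local_coloring_def by auto
  thus ?thesis by simp
qed

lemma pow_powr_inv:
  fixes y :: real
  assumes "y \<ge> 0" "e > 0"
  shows "(y ^ e) powr (1 / real e) = y"
proof (cases "y = 0")
  case True thus ?thesis using assms by simp
next
  case False
  hence "y > 0" using assms by simp
  hence "y ^ e = y powr real e" by (simp add: powr_realpow)
  thus ?thesis using assms \<open>y > 0\<close> by (simp add: powr_powr)
qed

lemma omega_from_poly: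
  fixes g :: "nat \<Rightarrow> nat"
  assumes A: "A \<ge> 1" and e: "e > 0"
    and bnd: "\<And>n. n \<ge> N0 \<Longrightarrow> real n \<le> (A * real (g n)) ^ e"
  shows "(\<lambda>n. real (g n)) \<in> \<Omega>(\<lambda>n. real n powr (1 / real e))"
proof -
  have "eventually (\<lambda>n. norm (real (g n)) \<ge> (1/A) * norm (real n powr (1 / real e))) at_top"
  proof (rule eventually_at_top_linorderI[of N0])
    fix n assume n: "n \<ge> N0"
    have "real n powr (1 / real e) \<le> ((A * real (g n)) ^ e) powr (1 / real e)"
      using bnd[OF n] by (intro powr_mono2) auto
    also have "\<dots> = A * real (g n)"
      using A e by (intro pow_powr_inv) auto
    finally show "norm (real (g n)) \<ge> (1/A) * norm (real n powr (1 / real e))"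
      using A by (simp add: field_simps)
  qed
  moreover have "(1/A) > 0" using A by simp
  ultimately show ?thesis unfolding bigomega_def by blast
qed

lemma cube_mean:
  fixes a :: "'i \<Rightarrow> real"
  assumes fin: "finite I" and nn: "\<And>i. i \<in> I \<Longrightarrow> a i \<ge> 0"
  shows "(\<Sum>i\<in>I. a i) ^ 3 \<le> (real (card I))\<^sup>2 * (\<Sum>i\<in>I. a i ^ 3)"
proof -
  define S1 where "S1 = (\<Sum>i\<in>I. a i)"
  define S2 where "S2 = (\<Sum>i\<in>I. (a i)\<^sup>2)"
  define S3 where "S3 = (\<Sum>i\<in>I. a i ^ 3)"
  have S1nn: "S1 \<ge> 0" unfolding S1_def using nn by (simp add: sum_nonneg)
  have S3nn: "S3 \<ge> 0" unfolding S3_def using nn by (simp add: sum_nonneg)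
  have c1: "S1\<^sup>2 \<le> S2 * card I" unfolding S1_def S2_def by (rule sum_squared_le_sum_of_squares)
  have c2: "S2\<^sup>2 \<le> S1 * S3"
  proof -
    have "(\<Sum>i\<in>I. sqrt (a i) * (a i * sqrt (a i)))\<^sup>2
          \<le> (\<Sum>i\<in>I. (sqrt (a i))\<^sup>2) * (\<Sum>i\<in>I. (a i * sqrt (a i))\<^sup>2)"
      by (rule Cauchy_Schwarz_ineq_sum)
    moreover have "(\<Sum>i\<in>I. sqrt (a i) * (a i * sqrt (a i))) = S2"
      unfolding S2_def by (rule sum.cong) (use nn in \<open>auto simp: power2_eq_square\<close>)
    moreover have "(\<Sum>i\<in>I. (sqrt (a i))\<^sup>2) = S1"
      unfolding S1_def by (rule sum.cong) (use nn in auto)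
    moreover have "(\<Sum>i\<in>I. (a i * sqrt (a i))\<^sup>2) = S3"
      unfolding S3_def by (rule sum.cong) (use nn in \<open>auto simp: power2_eq_square power3_eq_cube\<close>)
    ultimately show ?thesis by simp
  qed
  show ?thesis
  proof (cases "S1 = 0")
    case True thus ?thesis using S3nn unfolding S1_def[symmetric] S3_def[symmetric] by simp
  next
    case False
    hence pos: "S1 > 0" using S1nn by simp
    have "S1 ^ 4 = (S1\<^sup>2)\<^sup>2" by simp
    also have "\<dots> \<le> (S2 * card I)\<^sup>2" using c1 by (intro power_mono) auto
    also have "\<dots> = S2\<^sup>2 * (card I)\<^sup>2" by (simp add: power_mult_distrib)
    also have "\<dots> \<le> S1 * S3 * (card I)\<^sup>2" using c2 by (intro mult_right_mono) auto
    finally have "S1 * S1 ^ 3 \<le> S1 * (S3 * (card I)\<^sup>2)"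
      by (simp add: power_numeral_reduce mult_ac)
    hence "S1 ^ 3 \<le> S3 * (card I)\<^sup>2" using pos by simp
    thus ?thesis unfolding S1_def S3_def by (simp add: mult_ac)
  qed
qed

lemma card_fibers_sum:
  assumes fin: "finite D"
  shows "card D = (\<Sum>c\<in>\<kappa> ` D. card {x\<in>D. \<kappa> x = c})"
proof -
  have "card D = (\<Sum>x\<in>D. (1::nat))" by simp
  also have "\<dots> = (\<Sum>c\<in>\<kappa> ` D. \<Sum>x\<in>{x\<in>D. \<kappa> x = c}. (1::nat))" by (rule sum.image_gen[OF fin])
  also have "\<dots> = (\<Sum>c\<in>\<kappa> ` D. card {x\<in>D. \<kappa> x = c})" by simp
  finally show ?thesis .
qed

lemma same_class_pairs:
  assumes fin: "finite D" and K: "card (\<kappa> ` D) \<le> K"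
  shows "real (card D) ^ 2 \<le> real K * real (card {(x,y). x \<in> D \<and> y \<in> D \<and> \<kappa> x = \<kappa> y})"
proof -
  define F where "F c = {x\<in>D. \<kappa> x = c}" for c
  have eq: "{(x,y). x \<in> D \<and> y \<in> D \<and> \<kappa> x = \<kappa> y} = Sigma D (\<lambda>x. F (\<kappa> x))"
    unfolding F_def by auto
  have "card (Sigma D (\<lambda>x. F (\<kappa> x))) = (\<Sum>x\<in>D. card (F (\<kappa> x)))"
    using fin unfolding F_def by (simp add: card_SigmaI)
  also have "\<dots> = (\<Sum>c\<in>\<kappa> ` D. \<Sum>x\<in>{x\<in>D. \<kappa> x = c}. card (F (\<kappa> x)))"
    using fin by (rule sum.image_gen)
  also have "\<dots> = (\<Sum>c\<in>\<kappa> ` D. card (F c) * card (F c))"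
    by (rule sum.cong) (auto simp: F_def)
  finally have A: "card {(x,y). x \<in> D \<and> y \<in> D \<and> \<kappa> x = \<kappa> y} = (\<Sum>c\<in>\<kappa> ` D. card (F c) * card (F c))"
    using eq by simp
  have B: "card D = (\<Sum>c\<in>\<kappa> ` D. card (F c))"
    unfolding F_def by (rule card_fibers_sum[OF fin])
  have "real (card D) ^ 2 = (\<Sum>c\<in>\<kappa> ` D. real (card (F c)))\<^sup>2" using B by simp
  also have "\<dots> \<le> (\<Sum>c\<in>\<kappa> ` D. (real (card (F c)))\<^sup>2) * card (\<kappa> ` D)"
    by (rule sum_squared_le_sum_of_squares)
  also have "\<dots> \<le> (\<Sum>c\<in>\<kappa> ` D. (real (card (F c)))\<^sup>2) * K"
    using K by (intro mult_left_mono) (auto simp: sum_nonneg)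
  also have "(\<Sum>c\<in>\<kappa> ` D. (real (card (F c)))\<^sup>2) = real (card {(x,y). x \<in> D \<and> y \<in> D \<and> \<kappa> x = \<kappa> y})"
    unfolding A by (simp add: power2_eq_square)
  finally show ?thesis by (simp add: mult_ac)
qed

lemma same_class_triples:
  assumes fin: "finite D" and K: "card (\<kappa> ` D) \<le> K"
  shows "real (card D) ^ 3 \<le> (real K)\<^sup>2 * real (card {(x,y,z). x \<in> D \<and> y \<in> D \<and> z \<in> D \<and> \<kappa> x = \<kappa> y \<and> \<kappa> y = \<kappa> z})"
proof -
  define F where "F c = {x\<in>D. \<kappa> x = c}" for c
  have eq: "{(x,y,z). x \<in> D \<and> y \<in> D \<and> z \<in> D \<and> \<kappa> x = \<kappa> y \<and> \<kappa> y = \<kappa> z} = Sigma D (\<lambda>x. F (\<kappa> x) \<times> F (\<kappa> x))"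
    unfolding F_def by auto
  have "card (Sigma D (\<lambda>x. F (\<kappa> x) \<times> F (\<kappa> x))) = (\<Sum>x\<in>D. card (F (\<kappa> x)) * card (F (\<kappa> x)))"
    using fin unfolding F_def by (simp add: card_SigmaI card_cartesian_product)
  also have "\<dots> = (\<Sum>c\<in>\<kappa> ` D. \<Sum>x\<in>{x\<in>D. \<kappa> x = c}. card (F (\<kappa> x)) * card (F (\<kappa> x)))"
    using fin by (rule sum.image_gen)
  also have "\<dots> = (\<Sum>c\<in>\<kappa> ` D. card (F c) * card (F c) * card (F c))"
    by (rule sum.cong) (auto simp: F_def)
  finally have A: "card {(x,y,z). x \<in> D \<and> y \<in> D \<and> z \<in> D \<and> \<kappa> x = \<kappa> y \<and> \<kappa> y = \<kappa> z} = (\<Sum>c\<in>\<kappa> ` D. card (F c) * card (F c) * card (F c))"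
    using eq by simp
  have B: "card D = (\<Sum>c\<in>\<kappa> ` D. card (F c))"
    unfolding F_def by (rule card_fibers_sum[OF fin])
  have "real (card D) ^ 3 = (\<Sum>c\<in>\<kappa> ` D. real (card (F c))) ^ 3" using B by simp
  also have "\<dots> \<le> (real (card (\<kappa> ` D)))\<^sup>2 * (\<Sum>c\<in>\<kappa> ` D. (real (card (F c))) ^ 3)"
    using fin by (intro cube_mean) auto
  also have "\<dots> \<le> (real K)\<^sup>2 * (\<Sum>c\<in>\<kappa> ` D. (real (card (F c))) ^ 3)"
    using K by (intro mult_right_mono power_mono) (auto simp: sum_nonneg)
  also have "(\<Sum>c\<in>\<kappa> ` D. (real (card (F c))) ^ 3) = real (card {(x,y,z). x \<in> D \<and> y \<in> D \<and> z \<in> D \<and> \<kappa> x = \<kappa> y \<and> \<kappa> y = \<kappa> z})"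
    unfolding A by (simp add: power3_eq_cube)
  finally show ?thesis .
qed

lemma card_filter_sum:
  assumes "finite A"
  shows "card {a\<in>A. Q a} = (\<Sum>a\<in>A. if Q a then 1 else 0::nat)"
  using assms by (simp add: sum.If_cases Int_def)

lemma double_count:
  assumes "finite A" "finite P"
  shows "(\<Sum>p\<in>P. card {a\<in>A. R a p}) = (\<Sum>a\<in>A. card {p\<in>P. R a p})"
proof -
  have "(\<Sum>p\<in>P. card {a\<in>A. R a p}) = (\<Sum>p\<in>P. \<Sum>a\<in>A. if R a p then 1 else 0::nat)"
    using assms by (simp add: card_filter_sum)
  also have "\<dots> = (\<Sum>a\<in>A. \<Sum>p\<in>P. if R a p then 1 else 0::nat)" by (rule sum.swap)
  also have "\<dots> = (\<Sum>a\<in>A. card {p\<in>P. R a p})"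
    using assms by (simp add: card_filter_sum)
  finally show ?thesis .
qed

lemma exists_above_avg:
  fixes N :: "'p \<Rightarrow> nat"
  assumes fin: "finite P" and ne: "P \<noteq> {}" and S: "S \<le> real (\<Sum>p\<in>P. N p)" and B: "card P \<le> B"
  shows "\<exists>p\<in>P. S \<le> real (N p) * real B"
proof -
  define m where "m = Max (N ` P)"
  have "m \<in> N ` P" unfolding m_def using fin ne by (intro Max_in) auto
  then obtain p where p: "p \<in> P" "N p = m" by auto
  have "(\<Sum>p\<in>P. N p) \<le> (\<Sum>p\<in>P. m)"
    using fin unfolding m_def by (intro sum_mono Max_ge) auto
  also have "\<dots> = card P * m" by simp
  also have "\<dots> \<le> B * m" using B by simp
  finally have X: "(\<Sum>p\<in>P. N p) \<le> B * m" .
  have "real (\<Sum>p\<in>P. N p) \<le> real B * real m" using X by (metis of_nat_le_iff of_nat_mult)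
  with S p show ?thesis by (metis (no_types, lifting) mult.commute order_trans)
qed

lemma pair_avg:
  fixes D :: "'a \<Rightarrow> 'b set" and \<kappa> :: "'a \<Rightarrow> 'b \<Rightarrow> 'c"
  assumes finA: "finite A" and finU: "finite U" and DU: "\<And>a. a \<in> A \<Longrightarrow> D a \<subseteq> U"
    and K: "\<And>a. a \<in> A \<Longrightarrow> card (\<kappa> a ` D a) \<le> K" and Kpos: "K > 0" and U2: "card U \<ge> 2"
  shows "\<exists>x\<in>U. \<exists>y\<in>U. x \<noteq> y \<and> (\<Sum>a\<in>A. real (card (D a))^2 / K - real (card (D a)))
           \<le> real (card {a\<in>A. x \<in> D a \<and> y \<in> D a \<and> \<kappa> a x = \<kappa> a y}) * real (card U)^2"
proof -
  define P where "P = {(x,y). x \<in> U \<and> y \<in> U \<and> x \<noteq> y}"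
  define R where "R a p = (case p of (x,y) \<Rightarrow> x \<in> D a \<and> y \<in> D a \<and> \<kappa> a x = \<kappa> a y)" for a p
  have finP: "finite P"
    by (rule finite_subset[of _ "U \<times> U"]) (auto simp: P_def finU)
  have cardP: "card P \<le> card U ^ 2"
  proof -
    have "card P \<le> card (U \<times> U)" unfolding P_def using finU by (intro card_mono) auto
    thus ?thesis by (simp add: card_cartesian_product power2_eq_square)
  qed
  obtain x0 y0 where "x0 \<in> U" "y0 \<in> U" "x0 \<noteq> y0"
  proof -
    obtain B where "B \<subseteq> U" "card B = 2" using U2 by (meson obtain_subset_with_card_n)
    then obtain x0 y0 where "B = {x0,y0}" "x0 \<noteq> y0" by (auto simp: card_2_iff)
    thus ?thesis using that \<open>B \<subseteq> U\<close> by auto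
  qed
  hence neP: "P \<noteq> {}" unfolding P_def by auto
  have each: "real (card (D a))^2 / K - real (card (D a)) \<le> real (card {p\<in>P. R a p})" if a: "a \<in> A" for a
  proof -
    let ?S = "{(x,y). x \<in> D a \<and> y \<in> D a \<and> \<kappa> a x = \<kappa> a y}"
    have finD: "finite (D a)" using DU[OF a] finU by (rule finite_subset)
    have 1: "real (card (D a)) ^ 2 \<le> real K * real (card ?S)"
      by (rule same_class_pairs[OF finD K[OF a]])
    have sub: "?S \<subseteq> {p\<in>P. R a p} \<union> (\<lambda>x. (x,x)) ` D a"
      using DU[OF a] unfolding P_def R_def by auto
    have "card ?S \<le> card ({p\<in>P. R a p} \<union> (\<lambda>x. (x,x)) ` D a)"
      using finP finD by (intro card_mono[OF _ sub]) auto
    also have "\<dots> \<le> card {p\<in>P. R a p} + card ((\<lambda>x. (x,x)) ` D a)" by (rule card_Un_le)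
    also have "\<dots> \<le> card {p\<in>P. R a p} + card (D a)" using card_image_le[OF finD] by simp
    finally have 2: "real (card ?S) \<le> real (card {p\<in>P. R a p}) + real (card (D a))" by linarith
    have "real (card (D a))^2 / K \<le> real (card ?S)" using 1 Kpos by (simp add: field_simps)
    with 2 show ?thesis by linarith
  qed
  have "(\<Sum>a\<in>A. real (card (D a))^2 / K - real (card (D a))) \<le> (\<Sum>a\<in>A. real (card {p\<in>P. R a p}))"
    by (rule sum_mono) (rule each)
  also have "\<dots> = real (\<Sum>p\<in>P. card {a\<in>A. R a p})"
    by (simp add: double_count[OF finA finP])
  finally obtain p where p: "p \<in> P"
    and "(\<Sum>a\<in>A. real (card (D a))^2 / K - real (card (D a))) \<le> real (card {a\<in>A. R a p}) * real (card U ^ 2)"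
    using exists_above_avg[OF finP neP _ cardP] by blast
  thus ?thesis unfolding P_def R_def by auto
qed

lemma triple_avg:
  fixes D :: "'a \<Rightarrow> 'b set" and \<kappa> :: "'a \<Rightarrow> 'b \<Rightarrow> 'c"
  assumes finA: "finite A" and finU: "finite U" and DU: "\<And>a. a \<in> A \<Longrightarrow> D a \<subseteq> U"
    and K: "\<And>a. a \<in> A \<Longrightarrow> card (\<kappa> a ` D a) \<le> K" and Kpos: "K > 0" and U3: "card U \<ge> 3"
  shows "\<exists>x\<in>U. \<exists>y\<in>U. \<exists>z\<in>U. x \<noteq> y \<and> y \<noteq> z \<and> x \<noteq> z \<and>
           (\<Sum>a\<in>A. real (card (D a))^3 / K^2 - 3 * real (card (D a))^2)
           \<le> real (card {a\<in>A. x \<in> D a \<and> y \<in> D a \<and> z \<in> D a \<and> \<kappa> a x = \<kappa> a y \<and> \<kappa> a y = \<kappa> a z}) * real (card U)^3"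
proof -
  define P where "P = {(x,y,z). x \<in> U \<and> y \<in> U \<and> z \<in> U \<and> x \<noteq> y \<and> y \<noteq> z \<and> x \<noteq> z}"
  define R where "R a p = (case p of (x,y,z) \<Rightarrow> x \<in> D a \<and> y \<in> D a \<and> z \<in> D a \<and> \<kappa> a x = \<kappa> a y \<and> \<kappa> a y = \<kappa> a z)" for a p
  have finUUU: "finite (U \<times> U \<times> U)" using finU by simp
  have finP: "finite P" unfolding P_def
    by (rule finite_subset[rotated, OF finUUU]) auto
  have cardP: "card P \<le> card U ^ 3"
  proof -
    have "card P \<le> card (U \<times> U \<times> U)" unfolding P_def using finUUU by (intro card_mono) auto
    thus ?thesis by (simp add: card_cartesian_product power3_eq_cube)
  qed
  obtain x0 y0 z0 where "x0 \<in> U" "y0 \<in> U" "z0 \<in> U" "x0 \<noteq> y0" "y0 \<noteq> z0" "x0 \<noteq> z0"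
  proof -
    obtain B where "B \<subseteq> U" "card B = 3" using U3 by (meson obtain_subset_with_card_n)
    then obtain x0 y0 z0 where "B = {x0,y0,z0}" "x0 \<noteq> y0" "y0 \<noteq> z0" "x0 \<noteq> z0"
      by (auto simp: card_3_iff)
    thus ?thesis using that \<open>B \<subseteq> U\<close> by auto
  qed
  hence neP: "P \<noteq> {}" unfolding P_def by auto
  have each: "real (card (D a))^3 / K^2 - 3 * real (card (D a))^2 \<le> real (card {p\<in>P. R a p})" if a: "a \<in> A" for a
  proof -
    let ?S = "{(x,y,z). x \<in> D a \<and> y \<in> D a \<and> z \<in> D a \<and> \<kappa> a x = \<kappa> a y \<and> \<kappa> a y = \<kappa> a z}"
    have finD: "finite (D a)" using DU[OF a] finU by (rule finite_subset)
    have 1: "real (card (D a)) ^ 3 \<le> (real K)\<^sup>2 * real (card ?S)"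
      by (rule same_class_triples[OF finD K[OF a]])
    let ?B1 = "(\<lambda>(x,z). (x,x,z)) ` (D a \<times> D a)"
    let ?B2 = "(\<lambda>(x,y). (x,y,y)) ` (D a \<times> D a)"
    let ?B3 = "(\<lambda>(x,y). (x,y,x)) ` (D a \<times> D a)"
    have sub: "?S \<subseteq> {p\<in>P. R a p} \<union> (?B1 \<union> ?B2 \<union> ?B3)"
      using DU[OF a] unfolding P_def R_def by (auto simp: image_iff)
    have cB: "card (?B1 \<union> ?B2 \<union> ?B3) \<le> 3 * card (D a)^2"
    proof -
      have "card (?B1 \<union> ?B2 \<union> ?B3) \<le> card ?B1 + card ?B2 + card ?B3"
        by (meson add_le_mono card_Un_le le_trans order_refl)
      also have "\<dots> \<le> card (D a \<times> D a) + card (D a \<times> D a) + card (D a \<times> D a)"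
        by (intro add_mono card_image_le) (auto simp: finD)
      finally show ?thesis by (simp add: card_cartesian_product power2_eq_square)
    qed
    have "card ?S \<le> card ({p\<in>P. R a p} \<union> (?B1 \<union> ?B2 \<union> ?B3))"
      using finP finD by (intro card_mono[OF _ sub]) auto
    also have "\<dots> \<le> card {p\<in>P. R a p} + card (?B1 \<union> ?B2 \<union> ?B3)" by (rule card_Un_le)
    finally have h: "card ?S \<le> card {p\<in>P. R a p} + 3 * card (D a)^2" using cB by linarith
    have "real (card ?S) \<le> real (card {p\<in>P. R a p} + 3 * card (D a)^2)" using h by (simp only: of_nat_le_iff)
    hence 2: "real (card ?S) \<le> real (card {p\<in>P. R a p}) + 3 * real (card (D a))^2" by simp
    have "real (card (D a))^3 / K^2 \<le> real (card ?S)" using 1 Kpos by (simp add: field_simps)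
    with 2 show ?thesis by linarith
  qed
  have "(\<Sum>a\<in>A. real (card (D a))^3 / K^2 - 3 * real (card (D a))^2) \<le> (\<Sum>a\<in>A. real (card {p\<in>P. R a p}))"
    by (rule sum_mono) (rule each)
  also have "\<dots> = real (\<Sum>p\<in>P. card {a\<in>A. R a p})"
    by (simp add: double_count[OF finA finP])
  finally obtain p where p: "p \<in> P"
    and "(\<Sum>a\<in>A. real (card (D a))^3 / K^2 - 3 * real (card (D a))^2) \<le> real (card {a\<in>A. R a p}) * real (card U ^ 3)"
    using exists_above_avg[OF finP neP _ cardP] by blast
  thus ?thesis unfolding P_def R_def by auto
qed

lemma SP2_4: "SP2 4 = {{1,2,3},{2,3,4},{4,5,6},{5,6,7}}"
  by (simp add: SP2_def lessThan_Suc numeral_eq_Suc insert_commute)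

lemma SP1_4: "SP1 4 = {{1,2,3},{3,4,5},{4,5,6},{6,7,8}}"
  by (simp add: SP1_def lessThan_Suc numeral_eq_Suc insert_commute)

lemma SP3_U: "\<Union>SP3 = {0,1,2,3,4,5}" by (auto simp: SP3_def)

lemma arith_sp24:
  fixes N q m :: real
  assumes q: "q \<ge> 1" and N: "N \<ge> 20 * q^7" and m: "2*m \<ge> N - 1"
  shows "q^3 * N^3 < m * ((N-2)^3 / q^4 - 3*(N-2)^2)"
proof -
  have q4: "q^4 \<ge> 1" using q by (simp add: one_le_power)
  have q74: "q^7 \<ge> q^4" using q by (intro power_increasing) auto
  have N20: "N \<ge> 20" using N q74 q4 by linarith
  have a: "N - 2 \<ge> 6 * q^4" using N q74 q4 by linarith
  have b: "(N-2)/q^4 - 3 \<ge> (N-2)/(2*q^4)"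
  proof -
    have "(N-2)/(2*q^4) \<ge> 3" using a q4 by (subst pos_le_divide_eq) auto
    moreover have "(N-2)/q^4 = 2 * ((N-2)/(2*q^4))" using q4 by (simp add: divide_simps)
    ultimately show ?thesis by linarith
  qed
  have c: "(N-2)^3 / q^4 - 3*(N-2)^2 \<ge> (N-2)^3/(2*q^4)"
  proof -
    have "(N-2)^3 / q^4 - 3*(N-2)^2 = (N-2)^2 * ((N-2)/q^4 - 3)"
      using q4 by (simp add: field_simps power2_eq_square power3_eq_cube)
    also have "\<dots> \<ge> (N-2)^2 * ((N-2)/(2*q^4))" using b by (intro mult_left_mono) auto
    also have "(N-2)^2 * ((N-2)/(2*q^4)) = (N-2)^3/(2*q^4)" by (simp add: power2_eq_square power3_eq_cube)
    finally show ?thesis .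
  qed
  have d: "(N-2)^3 \<ge> N^3/2"
  proof -
    have "N - 2 \<ge> (4/5) * N" using N20 by linarith
    hence "(N-2)^3 \<ge> ((4/5)*N)^3" using N20 by (intro power_mono) auto
    also have "((4/5)*N)^3 = (64/125) * N^3" by (simp add: power3_eq_cube)
    finally have X: "(N-2)^3 \<ge> (64/125) * N^3" .
    moreover have "N^3 \<ge> 0" using N20 by simp
    ultimately show ?thesis by linarith
  qed
  have e: "m \<ge> N/3" using m N20 by linarith
  have "m * ((N-2)^3 / q^4 - 3*(N-2)^2) \<ge> (N/3) * ((N^3/2)/(2*q^4))"
  proof (rule mult_mono)
    show "N/3 \<le> m" by (rule e)
    show "(N^3/2)/(2*q^4) \<le> (N-2)^3 / q^4 - 3*(N-2)^2"
      using c d q4 by (smt (verit) divide_right_mono zero_le_power)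
  qed (use N20 e in auto)
  also have "(N/3) * ((N^3/2)/(2*q^4)) = N * N^3 / (12 * q^4)" by (simp add: field_simps)
  finally have f: "m * ((N-2)^3 / q^4 - 3*(N-2)^2) \<ge> N * N^3 / (12 * q^4)" .
  have "q^3 * N^3 * (12 * q^4) = (12 * q^7) * N^3" by (simp add: algebra_simps power_add[symmetric])
  also have "\<dots> < N * N^3" using N N20 q by (intro mult_strict_right_mono) auto
  finally have lt: "q^3 * N^3 * (12 * q^4) < N * N^3" .
  have "12*q^4 > 0" using q4 by linarith
  hence "q^3 * N^3 < N * N^3 / (12 * q^4)" using lt by (simp add: pos_less_divide_eq)
  with f show ?thesis by linarith
qed

lemma arith_sp14:
  fixes N q m :: real
  assumes q: "q \<ge> 1" and N: "N \<ge> 30 * q^8" and m: "2*m \<ge> N - 1"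
  shows "q^6 * m^3 < N * ((m-1)^3 / q^2 - 3 * m^2)"
proof -
  have q2: "q^2 \<ge> 1" using q by (simp add: one_le_power)
  have q82: "q^8 \<ge> q^2" using q by (intro power_increasing) auto
  have m14: "m \<ge> 14 * q^2" using N m q82 q2 by linarith
  have m5: "m \<ge> 5" using m14 q2 by linarith
  have d: "(m-1)^3 \<ge> m^3/2"
  proof -
    have "m - 1 \<ge> (4/5) * m" using m5 by linarith
    hence "(m-1)^3 \<ge> ((4/5)*m)^3" using m5 by (intro power_mono) auto
    also have "((4/5)*m)^3 = (64/125) * m^3" by (simp add: power3_eq_cube)
    finally have X: "(m-1)^3 \<ge> (64/125) * m^3" .
    moreover have "m^3 \<ge> 0" using m5 by simp
    ultimately show ?thesis by linarith
  qed
  have c: "(m-1)^3 / q^2 - 3 * m^2 \<ge> m^3 / (4*q^2)"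
  proof -
    have "(m-1)^3 / q^2 \<ge> (m^3/2) / q^2" using d q2 by (intro divide_right_mono) auto
    moreover have "m^3/(4*q^2) \<ge> 3 * m^2"
    proof -
      have "m^3 = m * m^2" by (simp add: power2_eq_square power3_eq_cube)
      moreover have "m * m^2 \<ge> (12 * q^2) * m^2"
        by (rule mult_right_mono) (use m14 q2 in linarith, simp)
      ultimately have lt: "3 * m^2 * (4 * q^2) \<le> m^3" by (simp add: algebra_simps)
      have "4*q^2 > 0" using q2 by linarith
      thus ?thesis using lt by (simp add: pos_le_divide_eq)
    qed
    moreover have "(m^3/2) / q^2 = 2 * (m^3/(4*q^2))" using q2 by (simp add: field_simps)
    ultimately show ?thesis by linarith
  qed
  have "N * ((m-1)^3 / q^2 - 3 * m^2) \<ge> N * (m^3 / (4*q^2))"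
    using c N q by (intro mult_left_mono) (auto intro: order_trans[OF _ N])
  moreover have "N * (m^3 / (4*q^2)) > q^6 * m^3"
  proof -
    have mp: "m^3 > 0" using m5 by simp
    have "q^6 * m^3 * (4 * q^2) = (4 * q^8) * m^3" by (simp add: algebra_simps power_add[symmetric])
    also have "\<dots> < N * m^3"
    proof (rule mult_strict_right_mono)
      have "q^8 \<ge> 1" using q by (simp add: one_le_power)
      thus "4 * q^8 < N" using N by linarith
    qed (rule mp)
    finally have lt: "q^6 * m^3 * (4 * q^2) < N * m^3" .
    have "4*q^2 > 0" using q2 by linarith
    hence "q^6 * m^3 < N * m^3 / (4 * q^2)" using lt by (simp add: pos_less_divide_eq)
    thus ?thesis by simp
  qed
  ultimately show ?thesis by linarith
qed

lemma bad_pair: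
  "e1 \<in> H \<Longrightarrow> e2 \<in> H \<Longrightarrow> e1 \<noteq> e2 \<Longrightarrow> f (\<phi> v) (\<phi> ` e1) = f (\<phi> v) (\<phi> ` e2)
   \<Longrightarrow> \<exists>e1\<in>H. \<exists>e2\<in>H. e1 \<noteq> e2 \<and> f (\<phi> v) (\<phi> ` e1) = f (\<phi> v) (\<phi> ` e2)"
  by blast

lemma colb_of:
  assumes "local_coloring n r H k f"
  shows "\<And>v e. v < n \<Longrightarrow> e \<subseteq> {..<n} \<Longrightarrow> card e = r \<Longrightarrow> f v e < k"
  using assms unfolding local_coloring_def by blast

lemma ne_by: "a \<in> A \<Longrightarrow> a \<notin> B \<Longrightarrow> A \<noteq> B" by auto

lemma card3: "a \<noteq> b \<Longrightarrow> b \<noteq> c \<Longrightarrow> a \<noteq> c \<Longrightarrow> card {a,b,c} = 3"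
  by auto

lemma sp24_bound:
  assumes lc: "local_coloring n 3 (SP2 4) k f" and k1: "k \<ge> 1"
  shows "real n < 20 * real k ^ 7"
proof (rule ccontr)
  assume "\<not> ?thesis"
  hence nb: "real n \<ge> 20 * real k ^ 7" by simp
  note colb = colb_of[OF lc]
  have k7: "real k ^ 7 \<ge> 1" using k1 by (simp add: one_le_power)
  have n20: "n \<ge> 20" using nb k7 by linarith
  define m where "m = n div 2"
  define D where "D i = {..<n} - {2*i, 2*i+1}" for i
  define \<kappa> where "\<kappa> i z = (f (2*i) {2*i, 2*i+1, z}, f (2*i+1) {2*i,2*i+1,z})" for i z
  have im: "2*i+1 < n" if "i < m" for i using that n20 unfolding m_def by linarith
  have Dcard: "card (D i) = n - 2" if "i < m" for i
    using im[OF that] unfolding D_def by (subst card_Diff_subset) auto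
  have K: "card (\<kappa> i ` D i) \<le> k^2" if i: "i < m" for i
  proof -
    have "\<kappa> i ` D i \<subseteq> {..<k} \<times> {..<k}"
    proof
      fix c assume "c \<in> \<kappa> i ` D i"
      then obtain z where z: "z \<in> D i" "c = \<kappa> i z" by auto
      have e: "{2*i, 2*i+1, z} \<subseteq> {..<n}" "card {2*i, 2*i+1, z} = 3"
        using z im[OF i] unfolding D_def by (auto intro: card3)
      show "c \<in> {..<k} \<times> {..<k}" using z colb[OF _ e] im[OF i] unfolding \<kappa>_def by auto
    qed
    hence "card (\<kappa> i ` D i) \<le> card ({..<k} \<times> {..<k})" by (intro card_mono) auto
    thus ?thesis by (simp add: power2_eq_square)
  qed
  have U3: "card {..<n} \<ge> 3" using n20 by simp
  obtain x y z where xyz: "x \<in> {..<n}" "y \<in> {..<n}" "z \<in> {..<n}" "x \<noteq> y" "y \<noteq> z" "x \<noteq> z"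
    and avg: "(\<Sum>i\<in>{..<m}. real (card (D i))^3 / real ((k^2)^2) - 3 * real (card (D i))^2)
           \<le> real (card {i\<in>{..<m}. x \<in> D i \<and> y \<in> D i \<and> z \<in> D i \<and> \<kappa> i x = \<kappa> i y \<and> \<kappa> i y = \<kappa> i z}) * real (card {..<n})^3"
    using triple_avg[of "{..<m}" "{..<n}" D \<kappa> "k^2", OF _ _ _ K _ U3] k1
    unfolding D_def by auto
  define G where "G = {i\<in>{..<m}. x \<in> D i \<and> y \<in> D i \<and> z \<in> D i \<and> \<kappa> i x = \<kappa> i y \<and> \<kappa> i y = \<kappa> i z}"
  have "(\<Sum>i\<in>{..<m}. real (card (D i))^3 / real ((k^2)^2) - 3 * real (card (D i))^2)
        = real m * ((real n - 2)^3 / real k ^ 4 - 3 * (real n - 2)^2)"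
    using n20 by (simp add: Dcard of_nat_diff power_mult[symmetric])
  moreover have "real k ^ 3 * real n ^ 3 < real m * ((real n - 2)^3 / real k ^ 4 - 3 * (real n - 2)^2)"
    by (rule arith_sp24) (use k1 nb in \<open>auto simp: m_def\<close>)
  ultimately have "real k ^ 3 * real n ^ 3 < real (card G) * real n ^ 3"
    using avg unfolding G_def by simp
  hence Gk: "card G > k ^ 3" using n20 by (simp add: of_nat_less_iff[symmetric] del: of_nat_less_iff)
  define col where "col i = (f x {y, 2*i, 2*i+1}, f y {y, 2*i, 2*i+1}, f z {y, 2*i, 2*i+1})" for i
  have colrng: "col ` G \<subseteq> {..<k} \<times> {..<k} \<times> {..<k}"
  proof
    fix c assume "c \<in> col ` G"
    then obtain i where i: "i \<in> G" "c = col i" by auto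
    have im': "2*i+1 < n" using i im unfolding G_def by auto
    have e: "{y, 2*i, 2*i+1} \<subseteq> {..<n}" "card {y, 2*i, 2*i+1} = 3"
      using i im' xyz unfolding G_def D_def by (auto intro: card3)
    show "c \<in> {..<k} \<times> {..<k} \<times> {..<k}" using i colb[OF _ e] xyz unfolding col_def by auto
  qed
  have "card (col ` G) \<le> card ({..<k} \<times> {..<k} \<times> {..<k})" using colrng by (intro card_mono) auto
  hence "card (col ` G) < card G" using Gk by (simp add: card_cartesian_product power3_eq_cube)
  hence "\<not> inj_on col G" by (rule pigeonhole)
  then obtain i i' where ii: "i \<in> G" "i' \<in> G" "i \<noteq> i'" "col i = col i'"
    unfolding inj_on_def by blast
  have iG: "i < m" "x \<notin> {2*i,2*i+1}" "y \<notin> {2*i,2*i+1}" "z \<notin> {2*i,2*i+1}"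
    "f (2*i) {2*i, 2*i+1, x} = f (2*i) {2*i, 2*i+1, y}"
    "f (2*i+1) {2*i, 2*i+1, x} = f (2*i+1) {2*i, 2*i+1, y}"
    "f (2*i) {2*i, 2*i+1, y} = f (2*i) {2*i, 2*i+1, z}"
    "f (2*i+1) {2*i, 2*i+1, y} = f (2*i+1) {2*i, 2*i+1, z}"
    using ii(1) unfolding G_def D_def \<kappa>_def by auto
  have iG': "i' < m" "x \<notin> {2*i',2*i'+1}" "y \<notin> {2*i',2*i'+1}" "z \<notin> {2*i',2*i'+1}"
    "f (2*i') {2*i', 2*i'+1, x} = f (2*i') {2*i', 2*i'+1, y}"
    "f (2*i'+1) {2*i', 2*i'+1, x} = f (2*i'+1) {2*i', 2*i'+1, y}"
    "f (2*i') {2*i', 2*i'+1, y} = f (2*i') {2*i', 2*i'+1, z}"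
    "f (2*i'+1) {2*i', 2*i'+1, y} = f (2*i'+1) {2*i', 2*i'+1, z}"
    using ii(2) unfolding G_def D_def \<kappa>_def by auto
  have cc: "f x {y, 2*i, 2*i+1} = f x {y, 2*i', 2*i'+1}"
     "f y {y, 2*i, 2*i+1} = f y {y, 2*i', 2*i'+1}"
     "f z {y, 2*i, 2*i+1} = f z {y, 2*i', 2*i'+1}"
    using ii(4) unfolding col_def by auto
  define \<phi> where "\<phi> j = (if j = 1 then x else if j = 2 then 2*i else if j = 3 then 2*i+1 else
     if j = (4::nat) then y else if j = 5 then 2*i' else if j = 6 then 2*i'+1 else z)" for j
  have U: "\<Union>(SP2 4) = {1,2,3,4,5,6,7}" by (auto simp: SP2_4)
  have dist: "2*i \<noteq> 2*i'" "2*i \<noteq> 2*i'+1" "2*i+1 \<noteq> 2*i'" "2*i+1 \<noteq> 2*i'+1"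
    using ii(3) by auto
  have inj: "inj_on \<phi> (\<Union>(SP2 4))"
    unfolding U inj_on_def using dist iG(2-4) iG'(2-4) xyz(4-6)
    by (auto simp: \<phi>_def)
  have rng: "\<phi> ` \<Union>(SP2 4) \<subseteq> {..<n}"
    unfolding U using xyz im[OF iG(1)] im[OF iG'(1)] by (auto simp: \<phi>_def)
  have p1: "\<phi> ` {1,2,3} = {x, 2*i, 2*i+1}" and p2: "\<phi> ` {2,3,4} = {2*i, 2*i+1, y}"
   and p3: "\<phi> ` {4,5,6} = {y, 2*i', 2*i'+1}" and p4: "\<phi> ` {5,6,7} = {2*i', 2*i'+1, z}"
    by (auto simp: \<phi>_def)
  have mem: "{1,2,3} \<in> SP2 4" "{2,3,4} \<in> SP2 4" "{4,5,6} \<in> SP2 4" "{5,6,7} \<in> SP2 4"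
    by (auto simp: SP2_4)
  have ne1: "{2,3,4} \<noteq> ({4,5,6}::nat set)" by (rule ne_by[of 2]) simp_all
  have ne2: "{1,2,3} \<noteq> ({2,3,4}::nat set)" by (rule ne_by[of 1]) simp_all
  have ne3: "{4,5,6} \<noteq> ({5,6,7}::nat set)" by (rule ne_by[of 4]) simp_all
  note ne = ne1 ne2 ne3
  have bad: "\<exists>e1\<in>SP2 4. \<exists>e2\<in>SP2 4. e1 \<noteq> e2 \<and> f (\<phi> v) (\<phi> ` e1) = f (\<phi> v) (\<phi> ` e2)"
    if v: "v \<in> \<Union>(SP2 4)" for v
  proof -
    from v have "v \<in> {1,2,3,4,5,6,7}" unfolding U .
    then consider "v = 1" | "v = 4" | "v = 7" | "v = 2" | "v = 3" | "v = 5" | "v = 6" by auto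
    thus ?thesis
    proof cases
      case 1
      show ?thesis by (rule bad_pair[OF mem(2) mem(3) ne(1)]) (use cc 1 in \<open>auto simp: p2 p3 \<phi>_def insert_commute\<close>)
    next
      case 2
      show ?thesis by (rule bad_pair[OF mem(2) mem(3) ne(1)]) (use cc 2 in \<open>auto simp: p2 p3 \<phi>_def insert_commute\<close>)
    next
      case 3
      show ?thesis by (rule bad_pair[OF mem(2) mem(3) ne(1)]) (use cc 3 in \<open>auto simp: p2 p3 \<phi>_def insert_commute\<close>)
    next
      case 4
      show ?thesis by (rule bad_pair[OF mem(1) mem(2) ne(2)]) (use iG 4 in \<open>auto simp: p1 p2 \<phi>_def insert_commute\<close>)
    next
      case 5
      show ?thesis by (rule bad_pair[OF mem(1) mem(2) ne(2)]) (use iG 5 in \<open>auto simp: p1 p2 \<phi>_def insert_commute\<close>)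
    next
      case 6
      show ?thesis by (rule bad_pair[OF mem(3) mem(4) ne(3)]) (use iG' 6 in \<open>auto simp: p3 p4 \<phi>_def insert_commute\<close>)
    next
      case 7
      show ?thesis by (rule bad_pair[OF mem(3) mem(4) ne(3)]) (use iG' 7 in \<open>auto simp: p3 p4 \<phi>_def insert_commute\<close>)
    qed
  qed
  show False by (rule no_bad_copy[OF lc inj rng bad])
qed

lemma sp14_bound:
  assumes lc: "local_coloring n 3 (SP1 4) k f" and k1: "k \<ge> 1"
  shows "real n < 30 * real k ^ 8"
proof (rule ccontr)
  assume "\<not> ?thesis"
  hence nb: "real n \<ge> 30 * real k ^ 8" by simp
  note colb = colb_of[OF lc]
  have k8: "real k ^ 8 \<ge> 1" using k1 by (simp add: one_le_power)
  have n30: "n \<ge> 30" using nb k8 by linarith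
  define m where "m = n div 2"
  have m15: "m \<ge> 15" using n30 unfolding m_def by linarith
  define D where "D w = {i\<in>{..<m}. w \<noteq> 2*i \<and> w \<noteq> 2*i+1}" for w
  define \<kappa> where "\<kappa> w i = f w {w, 2*i, 2*i+1}" for w i
  have im: "2*i+1 < n" "2*i < n" if "i < m" for i using that n30 unfolding m_def by linarith+
  have Dsub: "D w \<subseteq> {..<m}" for w unfolding D_def by auto
  have Dge: "card (D w) \<ge> m - 1" for w
  proof -
    have "{..<m} - {w div 2} \<subseteq> D w" unfolding D_def by auto
    hence "card ({..<m} - {w div 2}) \<le> card (D w)" by (intro card_mono) (auto simp: D_def)
    moreover have "card ({..<m} - {w div 2}) \<ge> m - 1" by (simp add: card_Diff_singleton_if)
    ultimately show ?thesis by linarith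
  qed
  have Dle: "card (D w) \<le> m" for w using card_mono[OF _ Dsub[of w]] by simp
  have K: "card (\<kappa> w ` D w) \<le> k" if w: "w \<in> {..<n}" for w
  proof -
    have "\<kappa> w ` D w \<subseteq> {..<k}"
    proof
      fix c assume "c \<in> \<kappa> w ` D w"
      then obtain i where i: "i \<in> D w" "c = \<kappa> w i" by auto
      have e: "{w, 2*i, 2*i+1} \<subseteq> {..<n}" "card {w, 2*i, 2*i+1} = 3"
        using i im w unfolding D_def by (auto intro: card3)
      show "c \<in> {..<k}" using i colb[OF _ e] w unfolding \<kappa>_def by auto
    qed
    hence "card (\<kappa> w ` D w) \<le> card {..<k}" by (intro card_mono) auto
    thus ?thesis by simp
  qed
  have U3: "card {..<m} \<ge> 3" using m15 by simp
  obtain i j l where ijl: "i \<in> {..<m}" "j \<in> {..<m}" "l \<in> {..<m}" "i \<noteq> j" "j \<noteq> l" "i \<noteq> l"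
    and avg: "(\<Sum>w\<in>{..<n}. real (card (D w))^3 / real (k^2) - 3 * real (card (D w))^2)
           \<le> real (card {w\<in>{..<n}. i \<in> D w \<and> j \<in> D w \<and> l \<in> D w \<and> \<kappa> w i = \<kappa> w j \<and> \<kappa> w j = \<kappa> w l}) * real (card {..<m})^3"
    using triple_avg[of "{..<n}" "{..<m}" D \<kappa> k, OF _ _ _ K _ U3] k1 Dsub by auto
  define G where "G = {w\<in>{..<n}. i \<in> D w \<and> j \<in> D w \<and> l \<in> D w \<and> \<kappa> w i = \<kappa> w j \<and> \<kappa> w j = \<kappa> w l}"
  have trm: "real (card (D w))^3 / real (k^2) - 3 * real (card (D w))^2
      \<ge> (real m - 1)^3 / real k^2 - 3 * real m ^ 2" for w
  proof -
    have a: "real (card (D w)) \<ge> real m - 1" using Dge[of w] m15 by linarith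
    have b: "real (card (D w)) \<le> real m" using Dle[of w] by simp
    have "(real m - 1)^3 \<le> real (card (D w))^3" using a m15 by (intro power_mono) auto
    hence X: "(real m - 1)^3 / real k^2 \<le> real (card (D w))^3 / real k^2"
      by (intro divide_right_mono) auto
    have c: "real (card (D w))^2 \<le> real m ^ 2" using b by (intro power_mono) auto
    have eq: "real (k^2) = real k ^ 2" by simp
    show ?thesis unfolding eq using X c by linarith
  qed
  have "real n * ((real m - 1)^3 / real k^2 - 3 * real m ^ 2)
        \<le> (\<Sum>w\<in>{..<n}. real (card (D w))^3 / real (k^2) - 3 * real (card (D w))^2)"
    using sum_mono[of "{..<n}" "\<lambda>_. (real m - 1)^3 / real k^2 - 3 * real m ^ 2", OF trm] by simp
  moreover have "real k ^ 6 * real m ^ 3 < real n * ((real m - 1)^3 / real k^2 - 3 * real m ^ 2)"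
    by (rule arith_sp14) (use k1 nb in \<open>auto simp: m_def\<close>)
  ultimately have "real k ^ 6 * real m ^ 3 < real (card G) * real m ^ 3"
    using avg unfolding G_def by simp
  hence Gk: "card G > k ^ 6" using m15 by (simp add: of_nat_less_iff[symmetric] del: of_nat_less_iff)
  define col where "col w = (f (2*i) {2*i,2*i+1,w}, f (2*i+1) {2*i,2*i+1,w},
      f (2*j) {2*i,2*i+1,w}, f (2*j+1) {2*i,2*i+1,w}, f (2*l) {2*i,2*i+1,w}, f (2*l+1) {2*i,2*i+1,w})" for w
  have colrng: "col ` G \<subseteq> {..<k} \<times> {..<k} \<times> {..<k} \<times> {..<k} \<times> {..<k} \<times> {..<k}"
  proof
    fix c assume "c \<in> col ` G"
    then obtain w where w: "w \<in> G" "c = col w" by auto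
    have e: "{2*i, 2*i+1, w} \<subseteq> {..<n}" "card {2*i, 2*i+1, w} = 3"
      using w im ijl unfolding G_def D_def by (auto intro: card3)
    show "c \<in> {..<k} \<times> {..<k} \<times> {..<k} \<times> {..<k} \<times> {..<k} \<times> {..<k}"
      using w colb[OF _ e] im ijl unfolding col_def by auto
  qed
  have "card (col ` G) \<le> card ({..<k} \<times> {..<k} \<times> {..<k} \<times> {..<k} \<times> {..<k} \<times> {..<k})"
    using colrng by (intro card_mono) auto
  also have "\<dots> = k ^ 6" by (simp add: card_cartesian_product eval_nat_numeral)
  finally have "card (col ` G) < card G" using Gk by simp
  hence "\<not> inj_on col G" by (rule pigeonhole)
  then obtain w w' where ww: "w \<in> G" "w' \<in> G" "w \<noteq> w'" "col w = col w'"
    unfolding inj_on_def by blast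
  have wG: "w < n" "w \<notin> {2*i,2*i+1}" "w \<notin> {2*j,2*j+1}" "w \<notin> {2*l,2*l+1}"
    "f w {w, 2*i, 2*i+1} = f w {w, 2*j, 2*j+1}"
    "f w {w, 2*j, 2*j+1} = f w {w, 2*l, 2*l+1}"
    using ww(1) unfolding G_def D_def \<kappa>_def by auto
  have wG': "w' < n" "w' \<notin> {2*i,2*i+1}" "w' \<notin> {2*j,2*j+1}" "w' \<notin> {2*l,2*l+1}"
    "f w' {w', 2*i, 2*i+1} = f w' {w', 2*j, 2*j+1}"
    "f w' {w', 2*j, 2*j+1} = f w' {w', 2*l, 2*l+1}"
    using ww(2) unfolding G_def D_def \<kappa>_def by auto
  have cc: "f (2*i) {2*i,2*i+1,w} = f (2*i) {2*i,2*i+1,w'}"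
    "f (2*i+1) {2*i,2*i+1,w} = f (2*i+1) {2*i,2*i+1,w'}"
    "f (2*j) {2*i,2*i+1,w} = f (2*j) {2*i,2*i+1,w'}"
    "f (2*j+1) {2*i,2*i+1,w} = f (2*j+1) {2*i,2*i+1,w'}"
    "f (2*l) {2*i,2*i+1,w} = f (2*l) {2*i,2*i+1,w'}"
    "f (2*l+1) {2*i,2*i+1,w} = f (2*l+1) {2*i,2*i+1,w'}"
    using ww(4) unfolding col_def by auto
  define \<phi> where "\<phi> v = (if v = 1 then 2*j else if v = 2 then 2*j+1 else if v = 3 then w else
     if v = (4::nat) then 2*i else if v = 5 then 2*i+1 else if v = 6 then w' else if v = 7 then 2*l else 2*l+1)" for v
  have U: "\<Union>(SP1 4) = {1,2,3,4,5,6,7,8}" by (auto simp: SP1_4)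
  have dist: "2*i \<noteq> 2*j" "2*i \<noteq> 2*j+1" "2*i+1 \<noteq> 2*j" "2*i+1 \<noteq> 2*j+1"
     "2*i \<noteq> 2*l" "2*i \<noteq> 2*l+1" "2*i+1 \<noteq> 2*l" "2*i+1 \<noteq> 2*l+1"
     "2*l \<noteq> 2*j" "2*l \<noteq> 2*j+1" "2*l+1 \<noteq> 2*j" "2*l+1 \<noteq> 2*j+1"
    using ijl by auto
  have inj: "inj_on \<phi> (\<Union>(SP1 4))"
    unfolding U inj_on_def using dist wG(2-4) wG'(2-4) ww(3)
    by (auto simp: \<phi>_def)
  have rng: "\<phi> ` \<Union>(SP1 4) \<subseteq> {..<n}"
    unfolding U using wG(1) wG'(1) im ijl by (auto simp: \<phi>_def)
  have p1: "\<phi> ` {1,2,3} = {w, 2*j, 2*j+1}" and p2: "\<phi> ` {3,4,5} = {w, 2*i, 2*i+1}"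
   and p2': "\<phi> ` {3,4,5} = {2*i, 2*i+1, w}" and p3: "\<phi> ` {4,5,6} = {2*i, 2*i+1, w'}"
   and p3': "\<phi> ` {4,5,6} = {w', 2*i, 2*i+1}" and p4: "\<phi> ` {6,7,8} = {w', 2*l, 2*l+1}"
    by (auto simp: \<phi>_def)
  have mem: "{1,2,3} \<in> SP1 4" "{3,4,5} \<in> SP1 4" "{4,5,6} \<in> SP1 4" "{6,7,8} \<in> SP1 4"
    by (auto simp: SP1_4)
  have ne1: "{1,2,3} \<noteq> ({3,4,5}::nat set)" by (rule ne_by[of 1]) simp_all
  have ne2: "{3,4,5} \<noteq> ({4,5,6}::nat set)" by (rule ne_by[of 3]) simp_all
  have ne3: "{4,5,6} \<noteq> ({6,7,8}::nat set)" by (rule ne_by[of 4]) simp_all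
  have mid: "f u {2*i, 2*i+1, w} = f u {2*i, 2*i+1, w'}" if "u \<in> {2*i,2*i+1,2*j,2*j+1,2*l,2*l+1}" for u
    using that cc by auto
  have bad: "\<exists>e1\<in>SP1 4. \<exists>e2\<in>SP1 4. e1 \<noteq> e2 \<and> f (\<phi> v) (\<phi> ` e1) = f (\<phi> v) (\<phi> ` e2)"
    if v: "v \<in> \<Union>(SP1 4)" for v
  proof -
    from v have "v \<in> {1,2,3,4,5,6,7,8}" unfolding U .
    then consider "v = 3" | "v = 6" | "v \<in> {1,2,4,5,7,8}" by auto
    thus ?thesis
    proof cases
      case 1
      show ?thesis by (rule bad_pair[OF mem(1) mem(2) ne1]) (simp only: p1 p2, simp add: 1 \<phi>_def, use wG(5) in simp)
    next
      case 2
      show ?thesis by (rule bad_pair[OF mem(3) mem(4) ne3]) (simp only: p3' p4, simp add: 2 \<phi>_def, use wG'(5,6) in simp)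
    next
      case 3
      hence "\<phi> v \<in> {2*i,2*i+1,2*j,2*j+1,2*l,2*l+1}" by (auto simp: \<phi>_def)
      thus ?thesis by (intro bad_pair[OF mem(2) mem(3) ne2]) (simp only: p2' p3, rule mid)
    qed
  qed
  show False by (rule no_bad_copy[OF lc inj rng bad])
qed

lemma arith_ht:
  fixes N q w M :: real
  assumes q: "q \<ge> 1" and w: "w * q^2 \<ge> N - 2" and N: "N \<ge> (2*M+12) * q^3" and M: "M \<ge> 0"
  shows "(2*q^2+3+M) * w^2 \<le> (N-2) * ((w-1)^2/q - w)" and "w \<ge> 2"
proof -
  have q2: "q^2 \<ge> 1" and q3: "q^3 \<ge> 1" using q by (simp_all add: one_le_power)
  have q32: "q^3 \<ge> q^2" using power_increasing[of 2 3 q] q by simp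
  have q3q: "q^3 \<ge> q" using power_increasing[of 1 3 q] q by simp
  have Mq: "2*M*q^3 \<ge> 2*M*q" using q3q M by (simp add: mult_left_mono)
  have N12: "N \<ge> 2*M*q^3 + 12*q^3" using N by (simp add: algebra_simps)
  have a: "N - 2 \<ge> (2*q+4) * q^2"
  proof -
    have "(2*q+4)*q^2 = 2*q^3 + 4*q^2" by (simp add: algebra_simps power2_eq_square power3_eq_cube)
    moreover have "2*M*q^3 \<ge> 0" using M q3 q by (intro mult_nonneg_nonneg) auto
    ultimately show ?thesis using N12 q32 q2 by linarith
  qed
  have b: "w \<ge> 2*q+4"
  proof -
    have "(2*q+4) * q^2 \<le> w * q^2" using a w by linarith
    thus ?thesis using q2 q by (simp add: mult_le_cancel_right)
  qed
  thus "w \<ge> 2" using q by linarith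
  have c: "(w-1)^2 - q*w \<ge> w^2/2"
  proof -
    have "(w-1)^2 - q*w - w^2/2 = w*(w/2 - q - 2) + 1" by (simp add: algebra_simps power2_eq_square)
    moreover have "w*(w/2 - q - 2) \<ge> 0" using b q by (intro mult_nonneg_nonneg) auto
    ultimately show ?thesis by linarith
  qed
  have d: "(w-1)^2/q - w \<ge> w^2/(2*q)"
  proof -
    have "(w-1)^2/q - w = ((w-1)^2 - q*w)/q" using q by (simp add: field_simps)
    also have "\<dots> \<ge> (w^2/2)/q" using c q by (intro divide_right_mono) auto
    finally show ?thesis by simp
  qed
  have e: "N - 2 \<ge> 2*q*(2*q^2+3+M)"
  proof -
    have "2*q*(2*q^2+3+M) = 4*q^3 + 6*q + 2*M*q" by (simp add: algebra_simps power2_eq_square power3_eq_cube)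
    thus ?thesis using N12 Mq q3q q3 by linarith
  qed
  have pos: "2*q*(2*q^2+3+M) \<ge> 0" using q M by (intro mult_nonneg_nonneg) auto
  have "(N-2) * ((w-1)^2/q - w) \<ge> (2*q*(2*q^2+3+M)) * (w^2/(2*q))"
  proof -
    have N2: "N - 2 \<ge> 0" using e pos by linarith
    show ?thesis using d e q M pos N2 by (intro mult_mono) auto
  qed
  also have "(2*q*(2*q^2+3+M)) * (w^2/(2*q)) = (2*q^2+3+M) * w^2" using q by (simp add: field_simps)
  finally show "(2*q^2+3+M) * w^2 \<le> (N-2) * ((w-1)^2/q - w)" .
qed

lemma htrick:
  assumes colb: "\<And>v e. v < n \<Longrightarrow> e \<subseteq> {..<n} \<Longrightarrow> card e = 3 \<Longrightarrow> f v e < k"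
    and k1: "k \<ge> 1" and nb: "(2*M + 12) * k^3 \<le> n"
  shows "\<exists>x y c r1 r2 r3 r4 E. distinct [0,1,x,y,c,r1,r2,r3,r4] \<and> x < n \<and> y < n \<and> c < n \<and>
     r1 < n \<and> r2 < n \<and> r3 < n \<and> r4 < n \<and> E \<subseteq> {..<n} \<and> finite E \<and> card E \<ge> M \<and>
     E \<inter> {0,1,x,y,c,r1,r2,r3,r4} = {} \<and>
     (\<forall>u \<in> {0,1,c,r1,r2,r3,r4} \<union> E. f u {0,1,x} = f u {0,1,y}) \<and>
     f x {c,r1,r2} = f x {c,r3,r4} \<and> f y {c,r1,r2} = f y {c,r3,r4}"
proof -
  have k3: "k^3 \<ge> 1" using k1 by (simp add: one_le_power)
  have "(2*M+12) * 1 \<le> (2*M+12) * k^3" using k3 by (rule mult_le_mono2)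
  hence "(2*M+12) * 1 \<le> n" using nb by (rule le_trans)
  hence n12: "n \<ge> 12" by simp
  define W0 where "W0 = {2..<n}"
  define \<kappa>0 where "\<kappa>0 z = (f 0 {0,1,z}, f 1 {0,1,z})" for z
  have e01: "{0,1,z} \<subseteq> {..<n}" "card {0,1,z} = 3" if "z \<in> W0" for z
    using that n12 unfolding W0_def by (auto intro: card3)
  have pf: "\<kappa>0 \<in> W0 \<rightarrow> {..<k} \<times> {..<k}"
    using colb e01 n12 unfolding \<kappa>0_def by auto
  have "0 \<in> {..<k}" using k1 by auto
  hence neB: "{..<k} \<times> {..<k} \<noteq> {}" by blast
  have finW0: "finite W0" unfolding W0_def by simp
  obtain \<gamma> where
    "card (\<kappa>0 -` {\<gamma>} \<inter> W0) * card ({..<k} \<times> {..<k}) \<ge> card W0"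
    using pigeonhole_card[OF pf finW0 _ neB] by blast
  define W where "W = \<kappa>0 -` {\<gamma>} \<inter> W0"
  have Wc: "card W * k^2 \<ge> n - 2" using \<open>card W0 \<le> _\<close> unfolding W_def W0_def
    by (simp add: card_cartesian_product power2_eq_square)
  have WW0: "W \<subseteq> W0" unfolding W_def by auto
  have finW: "finite W" using WW0 unfolding W0_def by (auto intro: finite_subset)
  have Wcls: "f 0 {0,1,x} = f 0 {0,1,y} \<and> f 1 {0,1,x} = f 1 {0,1,y}" if "x \<in> W" "y \<in> W" for x y
    using that unfolding W_def \<kappa>0_def by auto
  define A where "A = {2..<n}"
  define D where "D u = W - {u}" for u
  define \<kappa> where "\<kappa> u z = f u {0,1,z}" for u z
  have K: "card (\<kappa> u ` D u) \<le> k" if u: "u \<in> A" for u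
  proof -
    have "\<kappa> u ` D u \<subseteq> {..<k}"
      using u colb e01 WW0 unfolding \<kappa>_def D_def A_def by auto
    hence "card (\<kappa> u ` D u) \<le> card {..<k}" by (intro card_mono) auto
    thus ?thesis by simp
  qed
  define w where "w = card W"
  have wreal: "real w * real k ^ 2 \<ge> real n - 2"
  proof -
    have "real (n - 2) \<le> real (w * k^2)" using Wc unfolding w_def by (simp only: of_nat_le_iff)
    thus ?thesis using n12 by simp
  qed
  have AR: "(2*real k^2+3+real M) * real w^2 \<le> (real n-2) * ((real w-1)^2/real k - real w)"
   and w2: "real w \<ge> 2"
  proof -
    have "real ((2*M + 12) * k^3) \<le> real n" using nb by (simp only: of_nat_le_iff)
    hence nbr: "(2*real M + 12) * real k^3 \<le> real n" by simp
    have k1r: "real k \<ge> 1" using k1 by simp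
    show "(2*real k^2+3+real M) * real w^2 \<le> (real n-2) * ((real w-1)^2/real k - real w)"
      and "real w \<ge> 2" using arith_ht[OF k1r wreal nbr] by auto
  qed
  have W2: "card W \<ge> 2" using w2 unfolding w_def by simp
  obtain x y where xy: "x \<in> W" "y \<in> W" "x \<noteq> y"
    and avg: "(\<Sum>u\<in>A. real (card (D u))^2 / k - real (card (D u)))
           \<le> real (card {u\<in>A. x \<in> D u \<and> y \<in> D u \<and> \<kappa> u x = \<kappa> u y}) * real (card W)^2"
    using pair_avg[of A W D \<kappa> k, OF _ finW _ K _ W2] k1 unfolding A_def D_def by auto
  define Hs where "Hs = {u\<in>A. x \<in> D u \<and> y \<in> D u \<and> \<kappa> u x = \<kappa> u y}"
  have trm: "real (card (D u))^2 / k - real (card (D u)) \<ge> (real w - 1)^2 / k - real w" for u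
  proof -
    have a: "card (D u) \<ge> w - 1" "card (D u) \<le> w" unfolding D_def w_def
      using finW by (auto simp: card_Diff_singleton_if)
    have "real (card (D u)) \<ge> real w - 1" using a(1) W2 unfolding w_def by linarith
    hence "(real w - 1)^2 \<le> real (card (D u))^2" using w2 by (intro power_mono) auto
    hence "(real w - 1)^2 / k \<le> real (card (D u))^2 / k" by (intro divide_right_mono) auto
    moreover have "real (card (D u)) \<le> real w" using a(2) by simp
    ultimately show ?thesis by linarith
  qed
  have "(real n - 2) * ((real w - 1)^2 / k - real w) = (\<Sum>u\<in>A. (real w - 1)^2 / k - real w)"
    using n12 unfolding A_def by simp
  also have "\<dots> \<le> (\<Sum>u\<in>A. real (card (D u))^2 / k - real (card (D u)))"
    by (rule sum_mono) (rule trm)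
  finally have "(2*real k^2+3+real M) * real w^2 \<le> real (card Hs) * real w^2"
    using AR avg unfolding Hs_def w_def by linarith
  hence "2*real k^2+3+real M \<le> real (card Hs)" using w2 by (simp add: mult_le_cancel_right)
  hence "real (2*k^2+3+M) \<le> real (card Hs)" by simp
  hence Hsc: "2*k^2+3+M \<le> card Hs" by (simp only: of_nat_le_iff)
  have HsA: "Hs \<subseteq> {2..<n}" unfolding Hs_def A_def by auto
  have finHs: "finite Hs" using HsA by (auto intro: finite_subset)
  have Hsxy: "x \<notin> Hs" "y \<notin> Hs" unfolding Hs_def D_def by auto
  have Hsprop: "f u {0,1,x} = f u {0,1,y}" if "u \<in> Hs" for u using that unfolding Hs_def \<kappa>_def by auto
  obtain e where e: "bij_betw e {0..<card Hs} Hs" using ex_bij_betw_nat_finite[OF finHs] by blast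
  have einj: "inj_on e {0..<card Hs}" and erng: "e ` {0..<card Hs} = Hs" using e by (auto simp: bij_betw_def)
  have ein: "e j \<in> Hs" if "j < card Hs" for j using erng that by auto
  have eeq: "e a = e b \<longleftrightarrow> a = b" if "a < card Hs" "b < card Hs" for a b
    using einj that unfolding inj_on_def by auto
  define col where "col s = (f x {e 0, e (2*s+1), e (2*s+2)}, f y {e 0, e (2*s+1), e (2*s+2)})" for s
  have colrng: "col ` {..<k^2+1} \<subseteq> {..<k} \<times> {..<k}"
  proof
    fix z assume "z \<in> col ` {..<k^2+1}"
    then obtain s where s: "s < k^2+1" "z = col s" by auto
    have lt: "0 < card Hs" "2*s+1 < card Hs" "2*s+2 < card Hs" using s Hsc by auto
    have ed: "e 0 \<noteq> e (2*s+1)" "e (2*s+1) \<noteq> e (2*s+2)" "e 0 \<noteq> e (2*s+2)"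
      using eeq lt by auto
    have edge: "{e 0, e (2*s+1), e (2*s+2)} \<subseteq> {..<n}" "card {e 0, e (2*s+1), e (2*s+2)} = 3"
      using ein[OF lt(1)] ein[OF lt(2)] ein[OF lt(3)] HsA ed by (auto intro: card3)
    have "x < n" "y < n" using xy WW0 unfolding W0_def by auto
    thus "z \<in> {..<k} \<times> {..<k}" using s colb[OF _ edge] unfolding col_def by auto
  qed
  have "card (col ` {..<k^2+1}) \<le> card ({..<k} \<times> {..<k})" using colrng by (intro card_mono) auto
  hence "card (col ` {..<k^2+1}) < card {..<k^2+1}" by (simp add: card_cartesian_product power2_eq_square)
  hence "\<not> inj_on col {..<k^2+1}" by (rule pigeonhole)
  then obtain s s' where ss: "s < k^2+1" "s' < k^2+1" "s \<noteq> s'" "col s = col s'"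
    unfolding inj_on_def by auto
  define c where "c = e 0"
  define r1 where "r1 = e (2*s+1)"
  define r2 where "r2 = e (2*s+2)"
  define r3 where "r3 = e (2*s'+1)"
  define r4 where "r4 = e (2*s'+2)"
  define E where "E = e ` {2*k^2+3..<card Hs}"
  have lt: "0 < card Hs" "2*s+1 < card Hs" "2*s+2 < card Hs" "2*s'+1 < card Hs" "2*s'+2 < card Hs"
    using ss Hsc by auto
  have inHs: "c \<in> Hs" "r1 \<in> Hs" "r2 \<in> Hs" "r3 \<in> Hs" "r4 \<in> Hs"
    unfolding c_def r1_def r2_def r3_def r4_def using ein lt by auto
  have EHs: "E \<subseteq> Hs" unfolding E_def using erng by auto
  have dd: "distinct [c,r1,r2,r3,r4]"
    unfolding c_def r1_def r2_def r3_def r4_def using eeq lt ss(3) by auto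
  have Edisj: "E \<inter> {c,r1,r2,r3,r4} = {}"
  proof -
    have "j \<notin> {2*k^2+3..<card Hs}" if "j \<in> {0, 2*s+1, 2*s+2, 2*s'+1, 2*s'+2}" for j
      using that ss by auto
    thus ?thesis unfolding E_def c_def r1_def r2_def r3_def r4_def using eeq lt
      by (auto simp: image_iff)
  qed
  have cardE: "card E \<ge> M"
  proof -
    have "inj_on e {2*k^2+3..<card Hs}" using einj by (rule inj_on_subset) auto
    hence "card E = card {2*k^2+3..<card Hs}" unfolding E_def by (rule card_image)
    thus ?thesis using Hsc by simp
  qed
  have x01: "x \<notin> {0,1}" "y \<notin> {0,1}" using xy WW0 unfolding W0_def by auto
  have Hs01: "u \<notin> {0,1}" if "u \<in> Hs" for u using that HsA by auto
  show ?thesis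
  proof (intro exI conjI)
    show "distinct [0,1,x,y,c,r1,r2,r3,r4]"
      using dd x01 xy(3) Hsxy inHs Hs01[OF inHs(1)] Hs01[OF inHs(2)] Hs01[OF inHs(3)]
        Hs01[OF inHs(4)] Hs01[OF inHs(5)] by auto
    show "x < n" "y < n" using xy WW0 unfolding W0_def by auto
    show "c < n" "r1 < n" "r2 < n" "r3 < n" "r4 < n" using inHs HsA by auto
    show "E \<subseteq> {..<n}" using EHs HsA by auto
    show "finite E" using EHs finHs by (rule finite_subset)
    show "card E \<ge> M" by (rule cardE)
    show "E \<inter> {0,1,x,y,c,r1,r2,r3,r4} = {}"
      using Edisj EHs Hsxy Hs01 by blast
    show "\<forall>u \<in> {0,1,c,r1,r2,r3,r4} \<union> E. f u {0,1,x} = f u {0,1,y}"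
      using Wcls[OF xy(1,2)] inHs EHs Hsprop by blast
    show "f x {c,r1,r2} = f x {c,r3,r4}" "f y {c,r1,r2} = f y {c,r3,r4}"
      using ss(4) unfolding col_def c_def r1_def r2_def r3_def r4_def by auto
  qed
qed

lemma s1_bounds: "1 \<le> s1 i" "s1 i \<le> 2*i+1"
  by (induction i) auto

lemma s2_bounds: "1 \<le> s2 i" "s2 i \<le> 2*i+1"
  by (induction i) auto

lemma SP1_U: "\<Union>(SP1 t) \<subseteq> {1..<2*t+2}"
proof
  fix v assume "v \<in> \<Union>(SP1 t)"
  then obtain i where "i < t" "v \<in> {s1 i, s1 i + 1, s1 i + 2}" unfolding SP1_def by auto
  thus "v \<in> {1..<2*t+2}" using s1_bounds[of i] by auto
qed

lemma SP2_U: "\<Union>(SP2 t) \<subseteq> {1..<2*t+2}"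
proof
  fix v assume "v \<in> \<Union>(SP2 t)"
  then obtain i where "i < t" "v \<in> {s2 i, s2 i + 1, s2 i + 2}" unfolding SP2_def by auto
  thus "v \<in> {1..<2*t+2}" using s2_bounds[of i] by auto
qed

lemma s1_closed: "s1 i = i + (i+1) div 2 + 1"
proof (induction i)
  case (Suc i) thus ?case by simp
qed simp

lemma s2_closed: "s2 i = i + i div 2 + 1"
proof (induction i)
  case (Suc i) thus ?case by simp
qed simp

lemma SP1_mem: assumes t: "t \<ge> 5"
  shows "{1,2,3} \<in> SP1 t" "{3,4,5} \<in> SP1 t" "{6,7,8} \<in> SP1 t" "{7,8,9} \<in> SP1 t"
proof -
  have m: "{s1 i, s1 i + 1, s1 i + 2} \<in> SP1 t" if "i < t" for i
    using that unfolding SP1_def by auto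
  have v: "s1 0 = 1" "s1 1 = 3" "s1 3 = 6" "s1 4 = 7" by (simp_all add: s1_closed)
  have e0: "{s1 0, s1 0 + 1, s1 0 + 2} = {1,2,3}" unfolding v(1) by (simp add: numeral_2_eq_2 numeral_3_eq_3)
  have e1: "{s1 1, s1 1 + 1, s1 1 + 2} = {3,4,5}" unfolding v(2) by simp
  have e3: "{s1 3, s1 3 + 1, s1 3 + 2} = {6,7,8}" unfolding v(3) by simp
  have e4: "{s1 4, s1 4 + 1, s1 4 + 2} = {7,8,9}" unfolding v(4) by simp
  show "{1,2,3} \<in> SP1 t" using m[of 0] t unfolding e0 by simp
  show "{3,4,5} \<in> SP1 t" using m[of 1] t unfolding e1 by simp
  show "{6,7,8} \<in> SP1 t" using m[of 3] t unfolding e3 by simp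
  show "{7,8,9} \<in> SP1 t" using m[of 4] t unfolding e4 by simp
qed

lemma SP2_mem: assumes t: "t \<ge> 5"
  shows "{1,2,3} \<in> SP2 t" "{2,3,4} \<in> SP2 t" "{5,6,7} \<in> SP2 t" "{7,8,9} \<in> SP2 t"
proof -
  have m: "{s2 i, s2 i + 1, s2 i + 2} \<in> SP2 t" if "i < t" for i
    using that unfolding SP2_def by auto
  have v: "s2 0 = 1" "s2 1 = 2" "s2 3 = 5" "s2 4 = 7" by (simp_all add: s2_closed)
  have e0: "{s2 0, s2 0 + 1, s2 0 + 2} = {1,2,3}" unfolding v(1) by (simp add: numeral_2_eq_2 numeral_3_eq_3)
  have e1: "{s2 1, s2 1 + 1, s2 1 + 2} = {2,3,4}" unfolding v(2) by simp
  have e3: "{s2 3, s2 3 + 1, s2 3 + 2} = {5,6,7}" unfolding v(3) by simp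
  have e4: "{s2 4, s2 4 + 1, s2 4 + 2} = {7,8,9}" unfolding v(4) by simp
  show "{1,2,3} \<in> SP2 t" using m[of 0] t unfolding e0 by simp
  show "{2,3,4} \<in> SP2 t" using m[of 1] t unfolding e1 by simp
  show "{5,6,7} \<in> SP2 t" using m[of 3] t unfolding e3 by simp
  show "{7,8,9} \<in> SP2 t" using m[of 4] t unfolding e4 by simp
qed

lemma list_ext_inj:
  fixes L :: "nat list" and g :: "nat \<Rightarrow> nat"
  assumes dL: "distinct L" and len: "length L = 9" and gi: "inj_on g {10..<N}"
    and gE: "g ` {10..<N} \<subseteq> E" and disj: "E \<inter> set L = {}"
  shows "inj_on (\<lambda>v. if v < 10 then L ! (v - 1) else g v) {1..<N}"
proof (rule inj_onI)
  fix a b assume a: "a \<in> {1..<N}" and b: "b \<in> {1..<N}"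
    and eq: "(if a < 10 then L ! (a - 1) else g a) = (if b < 10 then L ! (b - 1) else g b)"
  show "a = b"
  proof (cases "a < 10"; cases "b < 10")
    assume "a < 10" "b < 10"
    hence "L ! (a - 1) = L ! (b - 1)" using eq by simp
    hence "a - 1 = b - 1" using nth_eq_iff_index_eq[OF dL] \<open>a < 10\<close> \<open>b < 10\<close> len by auto
    thus "a = b" using a b by auto
  next
    assume "a < 10" "\<not> b < 10"
    hence "L ! (a - 1) = g b" using eq by simp
    moreover have "L ! (a - 1) \<in> set L" using \<open>a < 10\<close> len by auto
    moreover have "g b \<in> E" using gE b \<open>\<not> b < 10\<close> by auto
    ultimately show "a = b" using disj by auto
  next
    assume "\<not> a < 10" "b < 10"
    hence "L ! (b - 1) = g a" using eq by simp
    moreover have "L ! (b - 1) \<in> set L" using \<open>b < 10\<close> len by auto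
    moreover have "g a \<in> E" using gE a \<open>\<not> a < 10\<close> by auto
    ultimately show "a = b" using disj by auto
  next
    assume "\<not> a < 10" "\<not> b < 10"
    hence "g a = g b" using eq by simp
    thus "a = b" using gi a b \<open>\<not> a < 10\<close> \<open>\<not> b < 10\<close> unfolding inj_on_def by auto
  qed
qed

lemma sp1t_bound:
  assumes t: "t \<ge> 5" and lc: "local_coloring n 3 (SP1 t) k f" and k1: "k \<ge> 1"
  shows "n < (4*t + 12) * k^3"
proof (rule ccontr)
  assume "\<not> ?thesis"
  hence nb: "(2*(2*t) + 12) * k^3 \<le> n" by simp
  note colb = colb_of[OF lc]
  obtain x y c r1 r2 r3 r4 E where d: "distinct [0,1,x,y,c,r1,r2,r3,r4]" and lt: "x < n" "y < n" "c < n"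
     "r1 < n" "r2 < n" "r3 < n" "r4 < n" and E: "E \<subseteq> {..<n}" "finite E" "card E \<ge> 2*t"
     "E \<inter> {0,1,x,y,c,r1,r2,r3,r4} = {}"
    and P: "\<forall>u \<in> {0,1,c,r1,r2,r3,r4} \<union> E. f u {0,1,x} = f u {0,1,y}"
     "f x {c,r1,r2} = f x {c,r3,r4}" "f y {c,r1,r2} = f y {c,r3,r4}"
    using htrick[where f=f and k=k and n=n and M="2*t", OF colb k1 nb] by blast
  have k3: "k^3 \<ge> 1" using k1 by (simp add: one_le_power)
  have "(2*(2*t)+12) * 1 \<le> (2*(2*t)+12) * k^3" using k3 by (rule mult_le_mono2)
  hence "(2*(2*t)+12) * 1 \<le> n" using nb by (rule le_trans)
  hence n2: "n \<ge> 2" by simp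
  have "card {10..<2*t+2} \<le> card E" using E(3) by simp
  then obtain g where g: "g ` {10..<2*t+2} \<subseteq> E" "inj_on g {10..<2*t+2}"
    using card_le_inj[of "{10..<2*t+2}" E] E(2) by auto
  define L where "L = [r1, r2, c, r3, r4, x, 0, 1, y]"
  define \<phi> where "\<phi> v = (if v < 10 then L ! (v - 1) else g v)" for v
  have dL: "distinct L" using d unfolding L_def by auto
  have disj: "E \<inter> set L = {}" using E(4) unfolding L_def by auto
  have inj: "inj_on \<phi> (\<Union>(SP1 t))"
    unfolding \<phi>_def by (rule inj_on_subset[OF list_ext_inj[OF dL _ g(2) g(1) disj] SP1_U]) (simp add: L_def)
  have rng: "\<phi> ` \<Union>(SP1 t) \<subseteq> {..<n}"
  proof
    fix z assume "z \<in> \<phi> ` \<Union>(SP1 t)"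
    then obtain v where v: "v \<in> {1..<2*t+2}" "z = \<phi> v" using SP1_U by blast
    show "z \<in> {..<n}"
    proof (cases "v < 10")
      case True
      hence "z = L ! (v - 1)" using v unfolding \<phi>_def by simp
      moreover have "v - 1 < length L" using True by (simp add: L_def)
      ultimately have "z \<in> set L" by simp
      thus ?thesis using lt n2 unfolding L_def by auto
    next
      case False
      hence "g v \<in> E" using v g(1) by auto
      thus ?thesis using v False E(1) unfolding \<phi>_def by auto
    qed
  qed
  have mem: "{1,2,3} \<in> SP1 t" "{3,4,5} \<in> SP1 t" "{6,7,8} \<in> SP1 t" "{7,8,9} \<in> SP1 t"
    using SP1_mem[OF t] by auto
  have pv: "\<phi> 1 = r1" "\<phi> 2 = r2" "\<phi> 3 = c" "\<phi> 4 = r3" "\<phi> 5 = r4" "\<phi> 6 = x"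
     "\<phi> 7 = 0" "\<phi> 8 = 1" "\<phi> 9 = y" by (simp_all add: \<phi>_def L_def)
  have p: "\<phi> ` {1,2,3} = {c,r1,r2}" "\<phi> ` {3,4,5} = {c,r3,r4}" "\<phi> ` {6,7,8} = {0,1,x}" "\<phi> ` {7,8,9} = {0,1,y}"
    by (simp_all only: image_insert image_empty pv) blast+
  have ne1: "{1,2,3} \<noteq> ({3,4,5}::nat set)" by (rule ne_by[of 1]) simp_all
  have ne2: "{6,7,8} \<noteq> ({7,8,9}::nat set)" by (rule ne_by[of 6]) simp_all
  have bad: "\<exists>e1\<in>SP1 t. \<exists>e2\<in>SP1 t. e1 \<noteq> e2 \<and> f (\<phi> v) (\<phi> ` e1) = f (\<phi> v) (\<phi> ` e2)"
    if v: "v \<in> \<Union>(SP1 t)" for v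
  proof -
    have v1: "v \<in> {1..<2*t+2}" using v SP1_U[of t] by blast
    consider "v = 6" | "v = 9" | "v \<noteq> 6 \<and> v \<noteq> 9" by blast
    thus ?thesis
    proof cases
      case 1
      have "\<phi> v = x" using 1 pv by simp
      thus ?thesis by (intro bad_pair[OF mem(1) mem(2) ne1]) (simp only: p, simp add: P(2))
    next
      case 2
      have "\<phi> v = y" using 2 pv by simp
      thus ?thesis by (intro bad_pair[OF mem(1) mem(2) ne1]) (simp only: p, simp add: P(3))
    next
      case 3
      have "\<phi> v \<in> {0,1,c,r1,r2,r3,r4} \<union> E"
      proof (cases "v < 10")
        case True
        hence "v \<in> {1,2,3,4,5,7,8}" using 3 v1 by auto
        thus ?thesis using pv by auto
      next
        case False
        hence "v \<in> {10..<2*t+2}" using v1 by auto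
        hence "g v \<in> E" using g(1) by blast
        thus ?thesis using False unfolding \<phi>_def by auto
      qed
      hence "f (\<phi> v) {0,1,x} = f (\<phi> v) {0,1,y}" using P(1) by blast
      thus ?thesis by (intro bad_pair[OF mem(3) mem(4) ne2]) (simp only: p)
    qed
  qed
  show False by (rule no_bad_copy[OF lc inj rng bad])
qed

lemma sp2t_bound:
  assumes t: "t \<ge> 5" and lc: "local_coloring n 3 (SP2 t) k f" and k1: "k \<ge> 1"
  shows "n < (4*t + 12) * k^3"
proof (rule ccontr)
  assume "\<not> ?thesis"
  hence nb: "(2*(2*t) + 12) * k^3 \<le> n" by simp
  note colb = colb_of[OF lc]
  obtain x y c r1 r2 r3 r4 E where d: "distinct [0,1,x,y,c,r1,r2,r3,r4]" and lt: "x < n" "y < n" "c < n"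
     "r1 < n" "r2 < n" "r3 < n" "r4 < n" and E: "E \<subseteq> {..<n}" "finite E" "card E \<ge> 2*t"
     "E \<inter> {0,1,x,y,c,r1,r2,r3,r4} = {}"
    and P: "\<forall>u \<in> {0,1,c,r1,r2,r3,r4} \<union> E. f u {0,1,x} = f u {0,1,y}"
     "f x {c,r1,r2} = f x {c,r3,r4}" "f y {c,r1,r2} = f y {c,r3,r4}"
    using htrick[where f=f and k=k and n=n and M="2*t", OF colb k1 nb] by blast
  have k3: "k^3 \<ge> 1" using k1 by (simp add: one_le_power)
  have "(2*(2*t)+12) * 1 \<le> (2*(2*t)+12) * k^3" using k3 by (rule mult_le_mono2)
  hence "(2*(2*t)+12) * 1 \<le> n" using nb by (rule le_trans)
  hence n2: "n \<ge> 2" by simp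
  have "card {10..<2*t+2} \<le> card E" using E(3) by simp
  then obtain g where g: "g ` {10..<2*t+2} \<subseteq> E" "inj_on g {10..<2*t+2}"
    using card_le_inj[of "{10..<2*t+2}" E] E(2) by auto
  define L where "L = [x, 0, 1, y, r1, r2, c, r3, r4]"
  define \<phi> where "\<phi> v = (if v < 10 then L ! (v - 1) else g v)" for v
  have dL: "distinct L" using d unfolding L_def by auto
  have disj: "E \<inter> set L = {}" using E(4) unfolding L_def by auto
  have inj: "inj_on \<phi> (\<Union>(SP2 t))"
    unfolding \<phi>_def by (rule inj_on_subset[OF list_ext_inj[OF dL _ g(2) g(1) disj] SP2_U]) (simp add: L_def)
  have rng: "\<phi> ` \<Union>(SP2 t) \<subseteq> {..<n}"
  proof
    fix z assume "z \<in> \<phi> ` \<Union>(SP2 t)"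
    then obtain v where v: "v \<in> {1..<2*t+2}" "z = \<phi> v" using SP2_U by blast
    show "z \<in> {..<n}"
    proof (cases "v < 10")
      case True
      hence "z = L ! (v - 1)" using v unfolding \<phi>_def by simp
      moreover have "v - 1 < length L" using True by (simp add: L_def)
      ultimately have "z \<in> set L" by simp
      thus ?thesis using lt n2 unfolding L_def by auto
    next
      case False
      hence "g v \<in> E" using v g(1) by auto
      thus ?thesis using v False E(1) unfolding \<phi>_def by auto
    qed
  qed
  have mem: "{1,2,3} \<in> SP2 t" "{2,3,4} \<in> SP2 t" "{5,6,7} \<in> SP2 t" "{7,8,9} \<in> SP2 t"
    using SP2_mem[OF t] by auto
  have pv: "\<phi> 1 = x" "\<phi> 2 = 0" "\<phi> 3 = 1" "\<phi> 4 = y" "\<phi> 5 = r1" "\<phi> 6 = r2"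
     "\<phi> 7 = c" "\<phi> 8 = r3" "\<phi> 9 = r4" by (simp_all add: \<phi>_def L_def)
  have p: "\<phi> ` {1,2,3} = {0,1,x}" "\<phi> ` {2,3,4} = {0,1,y}" "\<phi> ` {5,6,7} = {c,r1,r2}" "\<phi> ` {7,8,9} = {c,r3,r4}"
    by (simp_all only: image_insert image_empty pv) blast+
  have ne1: "{1,2,3} \<noteq> ({2,3,4}::nat set)" by (rule ne_by[of 1]) simp_all
  have ne2: "{5,6,7} \<noteq> ({7,8,9}::nat set)" by (rule ne_by[of 5]) simp_all
  have bad: "\<exists>e1\<in>SP2 t. \<exists>e2\<in>SP2 t. e1 \<noteq> e2 \<and> f (\<phi> v) (\<phi> ` e1) = f (\<phi> v) (\<phi> ` e2)"
    if v: "v \<in> \<Union>(SP2 t)" for v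
  proof -
    have v1: "v \<in> {1..<2*t+2}" using v SP2_U[of t] by blast
    consider "v = 1" | "v = 4" | "v \<noteq> 1 \<and> v \<noteq> 4" by blast
    thus ?thesis
    proof cases
      case 1
      have "\<phi> v = x" using 1 pv by simp
      thus ?thesis by (intro bad_pair[OF mem(3) mem(4) ne2]) (simp only: p, simp add: P(2))
    next
      case 2
      have "\<phi> v = y" using 2 pv by simp
      thus ?thesis by (intro bad_pair[OF mem(3) mem(4) ne2]) (simp only: p, simp add: P(3))
    next
      case 3
      have "\<phi> v \<in> {0,1,c,r1,r2,r3,r4} \<union> E"
      proof (cases "v < 10")
        case True
        hence "v \<in> {2,3,5,6,7,8,9}" using 3 v1 by auto
        thus ?thesis using pv by auto
      next
        case False
        hence "v \<in> {10..<2*t+2}" using v1 by auto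
        hence "g v \<in> E" using g(1) by blast
        thus ?thesis using False unfolding \<phi>_def by auto
      qed
      hence "f (\<phi> v) {0,1,x} = f (\<phi> v) {0,1,y}" using P(1) by blast
      thus ?thesis by (intro bad_pair[OF mem(1) mem(2) ne1]) (simp only: p)
    qed
  qed
  show False by (rule no_bad_copy[OF lc inj rng bad])
qed

definition trunc :: "nat \<Rightarrow> nat \<Rightarrow> nat" where "trunc k x = (if x < k then x else 0)"

definition idx :: "nat \<Rightarrow> (nat \<times> nat \<times> nat) list" where
  "idx m = [(p,i,j). p \<leftarrow> [0..<m], i \<leftarrow> [0..<m], j \<leftarrow> [0..<m]]"

lemma set_idx: "set (idx m) = {(p,i,j). p < m \<and> i < m \<and> j < m}"
  by (auto simp: idx_def image_iff)

lemma length_idx: "length (idx m) = m^3"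
  by (simp add: idx_def length_concat comp_def sum_list_triv power3_eq_cube)

definition kap :: "(nat \<Rightarrow> nat set \<Rightarrow> nat) \<Rightarrow> nat \<Rightarrow> nat \<Rightarrow> nat list \<Rightarrow> nat \<Rightarrow> nat list" where
  "kap f k m vs z = map (\<lambda>(p,i,j). trunc k (f (vs!p) {vs!i, vs!j, z})) (idx m)"

primrec bld :: "(nat \<Rightarrow> nat set \<Rightarrow> nat) \<Rightarrow> nat \<Rightarrow> nat \<Rightarrow> nat \<Rightarrow> nat \<Rightarrow> nat list \<times> nat set" where
  "bld f k m n 0 = ([], {..<n})"
| "bld f k m n (Suc t) = (let vs' = fst (bld f k m n t) @ [Min (snd (bld f k m n t))];
      Y = snd (bld f k m n t) - {Min (snd (bld f k m n t))} in
      (vs', {z\<in>Y. kap f k m vs' z = (SOME c. card Y \<le> card {z\<in>Y. kap f k m vs' z = c} * k ^ length (idx m))}))"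

context
  fixes f :: "nat \<Rightarrow> nat set \<Rightarrow> nat" and k m n :: nat
begin

definition "XX t = snd (bld f k m n t)"
definition "VV t = fst (bld f k m n t)"
definition "vv t = Min (XX t)"
definition "cc t = (SOME c. card (XX t - {vv t}) \<le> card {z\<in>XX t - {vv t}. kap f k m (VV t @ [vv t]) z = c} * k ^ length (idx m))"

lemma XX0: "XX 0 = {..<n}" by (simp add: XX_def)
lemma VV0: "VV 0 = []" by (simp add: VV_def)

lemma VV_Suc: "VV (Suc t) = VV t @ [vv t]"
  by (simp add: VV_def vv_def XX_def Let_def)

lemma XX_Suc: "XX (Suc t) = {z\<in>XX t - {vv t}. kap f k m (VV (Suc t)) z = cc t}"
  by (simp add: VV_def vv_def XX_def cc_def Let_def)

lemma VV_len: "length (VV t) = t"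
  by (induction t) (simp_all add: VV0 VV_Suc)

lemma VV_nth: "p < t \<Longrightarrow> VV t ! p = vv p"
proof (induction t)
  case 0 thus ?case by simp
next
  case (Suc t)
  thus ?case by (cases "p < t") (auto simp: VV_Suc nth_append VV_len less_Suc_eq)
qed

lemma XX_sub: "XX t \<subseteq> {..<n}"
proof (induction t)
  case 0 thus ?case by (simp add: XX0)
next
  case (Suc t) thus ?case by (auto simp: XX_Suc)
qed

lemma XX_fin: "finite (XX t)"
  using XX_sub by (rule finite_subset) simp

lemma XX_Suc_sub: "XX (Suc t) \<subseteq> XX t - {vv t}"
  by (auto simp: XX_Suc)

lemma XX_mono: "t \<le> t' \<Longrightarrow> XX t' \<subseteq> XX t"
proof (induction t' rule: dec_induct)
  case base thus ?case by simp
next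
  case (step t') thus ?case using XX_Suc_sub[of t'] by auto
qed

lemma XX_pig:
  assumes k1: "k \<ge> 1"
  shows "card (XX t) - 1 \<le> card (XX (Suc t)) * k ^ length (idx m)"
proof -
  define Y where "Y = XX t - {vv t}"
  define \<kappa> where "\<kappa> = kap f k m (VV t @ [vv t])"
  define B where "B = {xs. set xs \<subseteq> {..<k} \<and> length xs = length (idx m)}"
  have finY: "finite Y" unfolding Y_def using XX_fin by simp
  have finB: "finite B" unfolding B_def by (rule finite_lists_length_eq) simp
  have cardB: "card B = k ^ length (idx m)" unfolding B_def using card_lists_length_eq[of "{..<k}"] by simp
  have "replicate (length (idx m)) 0 \<in> B" unfolding B_def using k1 by auto
  hence neB: "B \<noteq> {}" by auto
  have kt: "trunc k x < k" for x unfolding trunc_def using k1 by auto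
  have kfun: "\<kappa> \<in> Y \<rightarrow> B" unfolding \<kappa>_def kap_def B_def using kt by auto
  obtain c where "c \<in> B" and c: "card (\<kappa> -` {c} \<inter> Y) * card B \<ge> card Y"
    using pigeonhole_card[OF kfun finY finB neB] by blast
  have eqset: "{z\<in>Y. \<kappa> z = c} = \<kappa> -` {c} \<inter> Y" by auto
  have ex: "\<exists>c. card Y \<le> card {z\<in>Y. \<kappa> z = c} * k ^ length (idx m)"
    by (rule exI[of _ c]) (use c cardB eqset in simp)
  have "card Y \<le> card {z\<in>Y. \<kappa> z = cc t} * k ^ length (idx m)"
    unfolding cc_def Y_def[symmetric] \<kappa>_def[symmetric] by (rule someI_ex[OF ex])
  moreover have "{z\<in>Y. \<kappa> z = cc t} = XX (Suc t)"
    unfolding XX_Suc Y_def \<kappa>_def VV_Suc by simp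
  moreover have "card (XX t) - 1 \<le> card Y" unfolding Y_def by (simp add: card_Diff_singleton_if XX_fin)
  ultimately show ?thesis by simp
qed

lemma XX_size:
  assumes k1: "k \<ge> 1" and nb: "2 * (2 * k ^ length (idx m)) ^ T \<le> n" and t: "t \<le> T"
  shows "2 * (2 * k ^ length (idx m)) ^ (T - t) \<le> card (XX t)"
  using t
proof (induction t)
  case 0 thus ?case using nb by (simp add: XX0)
next
  case (Suc t)
  define K where "K = k ^ length (idx m)"
  have K1: "K \<ge> 1" unfolding K_def using k1 by simp
  have IH: "2 * (2*K) ^ (T - t) \<le> card (XX t)" using Suc unfolding K_def by simp
  have e: "T - t = Suc (T - Suc t)" using Suc by simp
  have "card (XX t) - 1 \<le> card (XX (Suc t)) * K" using XX_pig[OF k1] unfolding K_def by simp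
  hence F1: "2 * (2*K) ^ (T - t) - 1 \<le> card (XX (Suc t)) * K" using IH by linarith
  have F2: "2 * (2*K) ^ (T - t) - 1 \<ge> K * (2 * (2*K) ^ (T - Suc t))"
  proof -
    define A where "A = (2*K) ^ (T - Suc t)"
    have A1: "A \<ge> 1" unfolding A_def using K1 by simp
    have KA: "K*A \<ge> 1" using A1 K1 by (simp add: one_le_mult_iff)
    have X: "2 * (2*K) ^ (T - t) = 4*(K*A)" by (simp add: e A_def algebra_simps)
    have Y: "K * (2 * (2*K) ^ (T - Suc t)) = 2*(K*A)" by (simp add: A_def algebra_simps)
    show ?thesis unfolding X Y using KA by linarith
  qed
  have "K * (2 * (2*K) ^ (T - Suc t)) \<le> K * card (XX (Suc t))"
    using le_trans[OF F2 F1] by (simp add: mult.commute)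
  hence "2 * (2*K) ^ (T - Suc t) \<le> card (XX (Suc t))" using K1 by simp
  thus ?case unfolding K_def by simp
qed

end

context
  fixes f :: "nat \<Rightarrow> nat set \<Rightarrow> nat" and k m n T :: nat
  assumes k1: "k \<ge> 1" and nb: "2 * (2 * k ^ length (idx m)) ^ T \<le> n"
begin

lemma XX_ne: "t \<le> T \<Longrightarrow> XX f k m n t \<noteq> {}"
proof -
  assume t: "t \<le> T"
  have "2 * (2 * k ^ length (idx m)) ^ (T - t) \<le> card (XX f k m n t)" by (rule XX_size[OF k1 nb t])
  moreover have "(2 * k ^ length (idx m)) ^ (T - t) \<ge> 1" using k1 by simp
  ultimately have "card (XX f k m n t) \<ge> 2" by linarith
  thus ?thesis by auto
qed

lemma vv_in: "t \<le> T \<Longrightarrow> vv f k m n t \<in> XX f k m n t"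
  unfolding vv_def by (rule Min_in[OF XX_fin XX_ne])

lemma vv_lt: "t \<le> T \<Longrightarrow> vv f k m n t < n"
  using vv_in XX_sub by blast

lemma vv_dist: "t < t' \<Longrightarrow> t' \<le> T \<Longrightarrow> vv f k m n t \<noteq> vv f k m n t'"
proof -
  assume a: "t < t'" "t' \<le> T"
  have "vv f k m n t' \<in> XX f k m n (Suc t)" using vv_in[OF a(2)] XX_mono[where f=f and k=k and m=m and n=n and t="Suc t" and t'=t'] a by auto
  thus ?thesis using XX_Suc_sub[of f k m n t] by auto
qed

lemma vv_key: "t < q \<Longrightarrow> q \<le> T \<Longrightarrow> kap f k m (VV f k m n (Suc t)) (vv f k m n q) = cc f k m n t"
proof -
  assume a: "t < q" "q \<le> T"
  have "vv f k m n q \<in> XX f k m n (Suc t)" using vv_in[OF a(2)] XX_mono[where f=f and k=k and m=m and n=n and t="Suc t" and t'=q] a by auto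
  thus ?thesis unfolding XX_Suc by auto
qed

lemma vv_prop:
  assumes "p \<le> t" "i \<le> t" "j \<le> t" "t < m" "t < q" "q \<le> T" "t < r" "r \<le> T"
  shows "trunc k (f (vv f k m n p) {vv f k m n i, vv f k m n j, vv f k m n q})
       = trunc k (f (vv f k m n p) {vv f k m n i, vv f k m n j, vv f k m n r})"
proof -
  let ?V = "VV f k m n (Suc t)"
  have "kap f k m ?V (vv f k m n q) = kap f k m ?V (vv f k m n r)"
    using vv_key[of t q] vv_key[of t r] assms by simp
  hence "\<forall>x\<in>set (idx m). (\<lambda>(p,i,j). trunc k (f (?V!p) {?V!i, ?V!j, vv f k m n q})) x
                       = (\<lambda>(p,i,j). trunc k (f (?V!p) {?V!i, ?V!j, vv f k m n r})) x"
    unfolding kap_def by (simp only: map_eq_conv)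
  moreover have "(p,i,j) \<in> set (idx m)" using assms by (simp add: set_idx)
  ultimately have "trunc k (f (?V!p) {?V!i, ?V!j, vv f k m n q}) = trunc k (f (?V!p) {?V!i, ?V!j, vv f k m n r})"
    by auto
  moreover have "?V!p = vv f k m n p" "?V!i = vv f k m n i" "?V!j = vv f k m n j"
    using assms by (auto intro: VV_nth)
  ultimately show ?thesis by simp
qed

end

lemma sp3_bound:
  assumes lc: "local_coloring n 3 SP3 k f" and k1: "k \<ge> 1"
  shows "n < 2 * (2 * k ^ length (idx (2*k^2+4))) ^ (2*k^2+3)"
proof (rule ccontr)
  define m where "m = 2*k^2+4"
  define T where "T = 2*k^2+3"
  define D where "D = 2*k^2+2"
  assume "\<not> ?thesis"
  hence nb: "2 * (2 * k ^ length (idx m)) ^ T \<le> n" unfolding m_def T_def by simp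
  note colb = colb_of[OF lc]
  define v where "v = vv f k m n"
  have vlt: "v t < n" if "t \<le> T" for t using vv_lt[OF k1 nb that] unfolding v_def .
  have vdist: "v t \<noteq> v t'" if "t \<noteq> t'" "t \<le> T" "t' \<le> T" for t t'
    using that vv_dist[where f=f and k=k and m=m and n=n and T=T, OF k1 nb, of t t']
      vv_dist[where f=f and k=k and m=m and n=n and T=T, OF k1 nb, of t' t] unfolding v_def
    by (cases "t < t'") auto
  have DT: "D < T" "Suc D = T" unfolding D_def T_def by auto
  have edge: "{v a, v b, v c} \<subseteq> {..<n}" "card {v a, v b, v c} = 3"
    if "a \<le> T" "b \<le> T" "c \<le> T" "a \<noteq> b" "b \<noteq> c" "a \<noteq> c" for a b c
    using that vlt vdist by (auto intro: card3)
  define col where "col s = (f (v D) {v (2*s), v (2*s+1), v D}, f (v (D+1)) {v (2*s), v (2*s+1), v D})" for s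
  have colrng: "col ` {..<k^2+1} \<subseteq> {..<k} \<times> {..<k}"
  proof
    fix z assume "z \<in> col ` {..<k^2+1}"
    then obtain s where s: "s < k^2+1" "z = col s" by auto
    have ix: "2*s < D" "2*s+1 < D" using s unfolding D_def by auto
    have e: "{v (2*s), v (2*s+1), v D} \<subseteq> {..<n}" "card {v (2*s), v (2*s+1), v D} = 3"
      using edge[of "2*s" "2*s+1" D] ix DT by auto
    show "z \<in> {..<k} \<times> {..<k}" using s colb[OF _ e] vlt DT unfolding col_def by auto
  qed
  have "card (col ` {..<k^2+1}) \<le> card ({..<k} \<times> {..<k})" using colrng by (intro card_mono) auto
  hence "card (col ` {..<k^2+1}) < card {..<k^2+1}" by (simp add: card_cartesian_product power2_eq_square)
  hence "\<not> inj_on col {..<k^2+1}" by (rule pigeonhole)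
  then obtain s s' where ss: "s < k^2+1" "s' < k^2+1" "s \<noteq> s'" "col s = col s'"
    unfolding inj_on_def by auto
  define a where "a = v (D+1)"
  define b where "b = v (2*s)"
  define c where "c = v (2*s+1)"
  define d where "d = v D"
  define x where "x = v (2*s')"
  define y where "y = v (2*s'+1)"
  have ix: "2*s < D" "2*s+1 < D" "2*s' < D" "2*s'+1 < D" using ss unfolding D_def by auto
  have lts: "a < n" "b < n" "c < n" "d < n" "x < n" "y < n"
    unfolding a_def b_def c_def d_def x_def y_def using vlt ix DT by auto
  have dist: "distinct [a,b,c,d,x,y]"
  proof -
    have "2*s \<noteq> 2*s'" "2*s \<noteq> 2*s'+1" "2*s+1 \<noteq> 2*s'" "2*s+1 \<noteq> 2*s'+1" using ss(3) by auto
    thus ?thesis unfolding a_def b_def c_def d_def x_def y_def using vdist ix DT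
      by (auto simp del: One_nat_def)
  qed
  have cc: "f a {b,c,d} = f a {x,y,d}" "f d {b,c,d} = f d {x,y,d}"
    using ss(4) unfolding col_def a_def b_def c_def d_def x_def y_def by auto
  have dbl: "f u {b,c,d} = f u {b,c,a}" if u: "u \<in> {b,c,x,y}" for u
  proof -
    obtain p where p: "p \<in> {2*s, 2*s+1, 2*s', 2*s'+1}" "u = v p"
      using u unfolding b_def c_def x_def y_def by auto
    have pD: "p \<le> D - 1" using p(1) ix by auto
    have "trunc k (f (v p) {v (2*s), v (2*s+1), v D}) = trunc k (f (v p) {v (2*s), v (2*s+1), v (D+1)})"
      unfolding v_def
      by (rule vv_prop[OF k1 nb]) (use pD ix DT in \<open>auto simp: m_def D_def T_def\<close>)
    moreover have "f (v p) {v (2*s), v (2*s+1), v D} < k"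
      using colb[OF _ edge[of "2*s" "2*s+1" D]] vlt p(1) ix DT by auto
    moreover have "f (v p) {v (2*s), v (2*s+1), v (D+1)} < k"
      using colb[OF _ edge[of "2*s" "2*s+1" "D+1"]] vlt p(1) ix DT by auto
    ultimately show ?thesis unfolding trunc_def p(2) b_def c_def d_def a_def by simp
  qed
  define \<phi> where "\<phi> i = [a,b,c,d,x,y] ! i" for i
  have U: "\<Union>SP3 = {0,1,2,3,4,5}" by (auto simp: SP3_def)
  have inj: "inj_on \<phi> (\<Union>SP3)"
    unfolding \<phi>_def U by (rule inj_on_nth[OF dist]) auto
  have rng: "\<phi> ` \<Union>SP3 \<subseteq> {..<n}" unfolding U \<phi>_def using lts by auto
  have pv: "\<phi> 0 = a" "\<phi> 1 = b" "\<phi> 2 = c" "\<phi> 3 = d" "\<phi> 4 = x" "\<phi> 5 = y"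
    by (simp_all add: \<phi>_def)
  have p: "\<phi> ` {0,1,2} = {b,c,a}" "\<phi> ` {1,2,3} = {b,c,d}" "\<phi> ` {3,4,5} = {x,y,d}"
    by (simp_all only: image_insert image_empty pv) blast+
  have mem: "{0,1,2} \<in> SP3" "{1,2,3} \<in> SP3" "{3,4,5} \<in> SP3" by (auto simp: SP3_def)
  have ne1: "{0,1,2} \<noteq> ({1,2,3}::nat set)" by (rule ne_by[of 0]) simp_all
  have ne2: "{1,2,3} \<noteq> ({3,4,5}::nat set)" by (rule ne_by[of 1]) simp_all
  have bad: "\<exists>e1\<in>SP3. \<exists>e2\<in>SP3. e1 \<noteq> e2 \<and> f (\<phi> w) (\<phi> ` e1) = f (\<phi> w) (\<phi> ` e2)"
    if w: "w \<in> \<Union>SP3" for w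
  proof -
    from w consider "w = 0" | "w = 3" | "w \<in> {1,2,4,5}" unfolding U by auto
    thus ?thesis
    proof cases
      case 1
      thus ?thesis by (intro bad_pair[OF mem(2) mem(3) ne2]) (simp only: p, simp add: pv cc)
    next
      case 2
      thus ?thesis by (intro bad_pair[OF mem(2) mem(3) ne2]) (simp only: p, simp add: pv cc)
    next
      case 3
      hence "\<phi> w \<in> {b,c,x,y}" using pv by auto
      hence "f (\<phi> w) {b,c,d} = f (\<phi> w) {b,c,a}" by (rule dbl)
      thus ?thesis by (intro bad_pair[OF mem(1) mem(2) ne1]) (simp only: p)
    qed
  qed
  show False by (rule no_bad_copy[OF lc inj rng bad])
qed

lemma sp3_nat_bound:
  assumes k1: "k \<ge> (1::nat)"
  shows "2 * (2 * k ^ length (idx (2*k^2+4))) ^ (2*k^2+3) \<le> (2*k) ^ (1296 * k^8)"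
proof -
  define m where "m = 2*k^2+4"
  define K where "K = k ^ (m^3)"
  have K1: "K \<ge> 1" unfolding K_def using k1 by simp
  have m1: "m \<ge> 1" unfolding m_def by simp
  have "2 * (2 * K) ^ (m - 1) \<le> (2*K) * (2 * K) ^ (m - 1)" using K1 by simp
  also have "\<dots> = (2*K) ^ m" using m1 by (metis Suc_diff_1 less_le_trans less_one linorder_not_le power_Suc zero_less_one)
  also have "2*K \<le> (2*k) ^ (m^3)"
  proof -
    have "(2::nat) ^ 1 \<le> 2 ^ (m^3)" using m1 by (intro power_increasing) auto
    hence "2 * K \<le> 2 ^ (m^3) * k ^ (m^3)" unfolding K_def by simp
    thus ?thesis by (simp add: power_mult_distrib)
  qed
  hence "(2*K) ^ m \<le> ((2*k) ^ (m^3)) ^ m" by (rule power_mono) simp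
  also have "\<dots> = (2*k) ^ (m^4)"
  proof -
    have "m^3 * m = m^4" by (simp add: power3_eq_cube power4_eq_xxxx)
    thus ?thesis by (simp only: power_mult[symmetric])
  qed
  also have "\<dots> \<le> (2*k) ^ (1296 * k^8)"
  proof (rule power_increasing)
    have "m \<le> 6 * k^2" unfolding m_def using k1 by (simp add: power2_eq_square)
    hence "m^4 \<le> (6*k^2)^4" by (rule power_mono) simp
    also have "\<dots> = 1296 * k^8" by (simp add: power_mult_distrib power_mult[symmetric])
    finally show "m^4 \<le> 1296 * k^8" .
    show "1 \<le> 2*k" using k1 by simp
  qed
  finally have A: "2 * (2 * K) ^ (m - 1) \<le> (2*k) ^ (1296 * k^8)" .
  have "length (idx (2*k^2+4)) = m^3" unfolding m_def by (rule length_idx)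
  moreover have "2*k^2+3 = m - 1" unfolding m_def by simp
  ultimately show ?thesis using A unfolding K_def by simp
qed

lemma omega_loglog:
  fixes g :: "nat \<Rightarrow> nat"
  assumes bnd: "\<And>n. n \<ge> N0 \<Longrightarrow> g n \<ge> 1 \<and> real n < (2 * real (g n)) ^ (1296 * g n ^ 8)"
  shows "(\<lambda>n. real (g n)) \<in> \<Omega>(\<lambda>n. (ln (real n) / ln (ln (real n))) powr (1/8))"
proof -
  have "eventually (\<lambda>n. norm (real (g n)) \<ge> (1/3) * norm ((ln (real n) / ln (ln (real n))) powr (1/8))) at_top"
  proof (rule eventually_at_top_linorderI[of "max N0 100"])
    fix n assume n: "n \<ge> max N0 100"
    have g1: "g n \<ge> 1" and lt: "real n < (2 * real (g n)) ^ (1296 * g n ^ 8)" using bnd n by auto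
    define k where "k = real (g n)"
    define L where "L = ln (real n)"
    have k1: "k \<ge> 1" unfolding k_def using g1 by simp
    have n100: "real n \<ge> 100" using n by simp
    have e3: "exp 3 \<le> (100::real)"
    proof -
      have "exp (3::real) = exp (real 3 * 1)" by simp
      also have "\<dots> = exp 1 ^ 3" by (rule exp_of_nat_mult)
      also have "\<dots> \<le> 3 ^ 3" using exp_le by (intro power_mono) auto
      finally show ?thesis by simp
    qed
    have L3: "L \<ge> 3" unfolding L_def using n100 e3 by (subst ln_ge_iff) auto
    have lnL: "ln L \<ge> 1" using L3 exp_le by (subst ln_ge_iff) auto
    have Lpos: "L > 0" using L3 by simp
    have "L < ln ((2 * k) ^ (1296 * g n ^ 8))"
      unfolding L_def k_def using lt n100 by (subst ln_less_cancel_iff) auto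
    also have "\<dots> = real (1296 * g n ^ 8) * ln (2*k)" by (rule ln_realpow)
    also have "\<dots> = (1296 * k^8) * ln (2*k)" by (simp add: k_def)
    finally have Lb: "L < (1296 * k^8) * ln (2*k)" .
    have key: "L / ln L \<le> (3*k)^8"
    proof (cases "2*k \<le> L")
      case True
      hence "ln (2*k) \<le> ln L" using k1 by (subst ln_le_cancel_iff) auto
      moreover have "(1296 * k^8) \<ge> 0" by simp
      ultimately have "(1296 * k^8) * ln (2*k) \<le> (1296 * k^8) * ln L" by (rule mult_left_mono)
      hence "L < (1296 * k^8) * ln L" using Lb by linarith
      hence "L / ln L < 1296 * k^8" using lnL by (subst pos_divide_less_eq) auto
      also have "1296 * k^8 \<le> (3*k)^8" using k1 by (simp add: power_mult_distrib)
      finally show ?thesis by simp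
    next
      case False
      have "L \<le> L * ln L" using lnL Lpos by (simp add: mult_le_cancel_left1)
      hence "L / ln L \<le> L" using lnL by (subst pos_divide_le_eq) auto
      also have "\<dots> \<le> 3*k" using False k1 by simp
      also have "3*k \<le> (3*k)^8"
      proof -
        have "(3*k)^1 \<le> (3*k)^8" using k1 by (intro power_increasing) auto
        thus ?thesis by simp
      qed
      finally show ?thesis .
    qed
    have "(L / ln L) powr (1/8) \<le> ((3*k)^8) powr (1/8)"
    proof (rule powr_mono2)
      show "0 \<le> L / ln L" using Lpos lnL L3 by (intro divide_nonneg_nonneg) auto
    qed (use key in auto)
    also have "\<dots> = 3*k" using pow_powr_inv[of "3*k" 8] k1 by simp
    finally have "(L / ln L) powr (1/8) \<le> 3*k" .
    moreover have "norm ((L / ln L) powr (1/8)) = (L / ln L) powr (1/8)" by simp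
    ultimately show "norm (real (g n)) \<ge> (1/3) * norm ((ln (real n) / ln (ln (real n))) powr (1/8))"
      unfolding L_def[symmetric] k_def[symmetric] using k1 by simp
  qed
  thus ?thesis unfolding bigomega_def by (intro CollectI exI[of _ "1/3"]) auto
qed

lemma poly_glue:
  assumes ne: "\<Union>H \<noteq> {}"
    and bound: "\<And>n k f. n \<ge> 3 \<Longrightarrow> local_coloring n 3 H k f \<Longrightarrow> k \<ge> 1 \<Longrightarrow> real n < A * real k ^ e"
    and A1: "A \<ge> 1" and e: "e > 0"
  shows "(\<lambda>n. real (C 3 n H)) \<in> \<Omega>(\<lambda>n. real n powr (1 / real e))"
proof (rule omega_from_poly[OF A1 e, of 3])
  fix n :: nat assume n: "n \<ge> 3"
  obtain f where lc: "local_coloring n 3 H (C 3 n H) f" using C_lc[OF ne] by blast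
  have k1: "C 3 n H \<ge> 1" by (rule colors_pos[OF lc n])
  have "real n < A * real (C 3 n H) ^ e" by (rule bound[OF n lc k1])
  also have "\<dots> \<le> A ^ e * real (C 3 n H) ^ e"
  proof (rule mult_right_mono)
    have "A ^ 1 \<le> A ^ e" using A1 e by (intro power_increasing) auto
    thus "A \<le> A ^ e" by simp
  qed simp
  also have "\<dots> = (A * real (C 3 n H)) ^ e" by (simp add: power_mult_distrib)
  finally show "real n \<le> (A * real (C 3 n H)) ^ e" by simp
qed

theorem theorem2:
  shows "(\<lambda>n. real (C 3 n SP3)) \<in> \<Omega>(\<lambda>n. (ln (real n) / ln (ln (real n))) powr (1/8))
    \<and> (\<lambda>n. real (C 3 n (SP1 4))) \<in> \<Omega>(\<lambda>n. real n powr (1/8))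
    \<and> (\<lambda>n. real (C 3 n (SP2 4))) \<in> \<Omega>(\<lambda>n. real n powr (1/7))
    \<and> (\<forall>t\<ge>5. (\<lambda>n. real (C 3 n (SP1 t))) \<in> \<Omega>(\<lambda>n. real n powr (1/3))
              \<and> (\<lambda>n. real (C 3 n (SP2 t))) \<in> \<Omega>(\<lambda>n. real n powr (1/3)))"
proof (intro conjI allI impI)
  show "(\<lambda>n. real (C 3 n SP3)) \<in> \<Omega>(\<lambda>n. (ln (real n) / ln (ln (real n))) powr (1/8))"
  proof (rule omega_loglog[of 3])
    fix n :: nat assume n: "n \<ge> 3"
    have ne: "\<Union>SP3 \<noteq> {}" by (auto simp: SP3_def)
    obtain f where lc: "local_coloring n 3 SP3 (C 3 n SP3) f" using C_lc[OF ne] by blast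
    define k where "k = C 3 n SP3"
    have k1: "k \<ge> 1" unfolding k_def by (rule colors_pos[OF lc n])
    have "n < 2 * (2 * k ^ length (idx (2*k^2+4))) ^ (2*k^2+3)"
      by (rule sp3_bound[OF lc[folded k_def] k1])
    also have "\<dots> \<le> (2*k) ^ (1296 * k^8)" by (rule sp3_nat_bound[OF k1])
    finally have "real n < real ((2*k) ^ (1296 * k^8))" by (simp only: of_nat_less_iff)
    hence "real n < (2 * real k) ^ (1296 * k^8)" by simp
    thus "C 3 n SP3 \<ge> 1 \<and> real n < (2 * real (C 3 n SP3)) ^ (1296 * C 3 n SP3 ^ 8)"
      using k1 unfolding k_def by simp
  qed
  have "(\<lambda>n. real (C 3 n (SP1 4))) \<in> \<Omega>(\<lambda>n. real n powr (1 / real (8::nat)))"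
  proof (rule poly_glue)
    show "\<Union>(SP1 4) \<noteq> {}" by (auto simp: SP1_4)
    fix n k f assume "n \<ge> 3" "local_coloring n 3 (SP1 4) k f" "k \<ge> 1"
    thus "real n < 30 * real k ^ 8" by (intro sp14_bound)
  qed auto
  thus "(\<lambda>n. real (C 3 n (SP1 4))) \<in> \<Omega>(\<lambda>n. real n powr (1/8))" by simp
  have "(\<lambda>n. real (C 3 n (SP2 4))) \<in> \<Omega>(\<lambda>n. real n powr (1 / real (7::nat)))"
  proof (rule poly_glue)
    show "\<Union>(SP2 4) \<noteq> {}" by (auto simp: SP2_4)
    fix n k f assume "n \<ge> 3" "local_coloring n 3 (SP2 4) k f" "k \<ge> 1"
    thus "real n < 20 * real k ^ 7" by (intro sp24_bound)
  qed auto
  thus "(\<lambda>n. real (C 3 n (SP2 4))) \<in> \<Omega>(\<lambda>n. real n powr (1/7))" by simp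
  fix t :: nat assume t: "t \<ge> 5"
  have "(\<lambda>n. real (C 3 n (SP1 t))) \<in> \<Omega>(\<lambda>n. real n powr (1 / real (3::nat)))"
  proof (rule poly_glue)
    have "(1::nat) \<in> \<Union>(SP1 t)" using SP1_mem(1)[OF t] by blast
    thus "\<Union>(SP1 t) \<noteq> {}" by blast
    fix n k f assume "n \<ge> 3" "local_coloring n 3 (SP1 t) k f" "k \<ge> 1"
    hence "n < (4*t + 12) * k^3" by (intro sp1t_bound[OF t])
    hence "real n < real ((4*t + 12) * k^3)" by (simp only: of_nat_less_iff)
    thus "real n < real (4*t+12) * real k ^ 3" by simp
  qed auto
  thus "(\<lambda>n. real (C 3 n (SP1 t))) \<in> \<Omega>(\<lambda>n. real n powr (1/3))" by simp
  have "(\<lambda>n. real (C 3 n (SP2 t))) \<in> \<Omega>(\<lambda>n. real n powr (1 / real (3::nat)))"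
  proof (rule poly_glue)
    have "(1::nat) \<in> \<Union>(SP2 t)" using SP2_mem(1)[OF t] by blast
    thus "\<Union>(SP2 t) \<noteq> {}" by blast
    fix n k f assume "n \<ge> 3" "local_coloring n 3 (SP2 t) k f" "k \<ge> 1"
    hence "n < (4*t + 12) * k^3" by (intro sp2t_bound[OF t])
    hence "real n < real ((4*t + 12) * k^3)" by (simp only: of_nat_less_iff)
    thus "real n < real (4*t+12) * real k ^ 3" by simp
  qed auto
  thus "(\<lambda>n. real (C 3 n (SP2 t))) \<in> \<Omega>(\<lambda>n. real n powr (1/3))" by simp
qed

end
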